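(* Let $a,b>0$, $M\ge 1$ and consider solutions $\mathbf u(t)=(u_x(t))_{x\in\mathbb Z}$ of the mean-field equations with initial values in $[0,1]^{\mathbb Z}$. (i) If expansion occurs, then there are $u,L,x_0,\delta,c>0$ with $u_-<u<u_+$ such that: whenever $u_x(0)\ge u$ for all $|x|\le L$, we have $u_x(t)\ge u+\delta$ for all $t>0$ and all $x$ with $|x|\le ct-x_0$. (ii) If retreat occurs, then there are $u,L,x_0,\delta,c>0$ with $0<u<u_-$ (when $a+b<4$, the requirement $u<u_-$ is dropped) such that: whenever $u_x(0)\le u$ for all $|x|\le L$, we have $u_x(t)\le u-\delta$ for all $t>0$ and all $x$ with $|x|\le ct-x_0$.
   Context: Fix parameters $a,b>0$ and an integer $M\ge 1$ (dispersal range). For $x,y\in\mathbb Z$ write $y\sim x$ iff $0<|x-y|\le M$. The mean-field equations are the system $$u_x'=\Big(a u_x^2+\frac{b}{2M}\sum_{y\sim x}u_y^2\Big)(1-u_x)-u_x,\qquad x\in\mathbb Z,$$ for $\mathbf u(t)=(u_x(t))_{x\in\mathbb Z}$; for every initial value in $[0,1]^{\mathbb Z}$ it has a unique global solution, which stays in $[0,1]^{\mathbb Z}$. Let $r=a+b$. When $r>4$ put $w=(1/4-1/r)^{1/2}$, $u_-=1/2-w$, $u_+=1/2+w$ (the nonzero zeros of $ru^2(1-u)-u$); when $r=4$ put $u_-=u_+=1/2$. Expansion (defined for $r>4$): there is $u$ with $u_-<u<u_+$ such that the solution with $u_x(0)=u\,\mathbf 1(x\le 0)$ satisfies $u_1(t_0)=u$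 for some $t_0>0$. Retreat (for $r\ge4$): there are $u_*,u^*$ with $0<u_*<u_-\le u_+<u^*\le 1$ such that the solution with $u_x(0)=u^*\mathbf 1(x<0)+u_*\mathbf 1(x\ge 0)$ satisfies $u_{-1}(t_0)=u_*$ for some $t_0>0$. By convention, retreat is also said to occur whenever $r<4$. *)

theory Defs
  imports Complex_Main
begin

definition nbrs :: "nat \<Rightarrow> int \<Rightarrow> int set" where
  "nbrs M x = {x - int M .. x + int M} - {x}"

definition mf_rhs :: "real \<Rightarrow> real \<Rightarrow> nat \<Rightarrow> (int \<Rightarrow> real) \<Rightarrow> int \<Rightarrow> real" where
  "mf_rhs a b M v x =
     (a * (v x)\<^sup>2 + b / (2 * real M) * (\<Sum>y\<in>nbrs M x. (v y)\<^sup>2)) * (1 - v x) - v x"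

definition mf_solution :: "real \<Rightarrow> real \<Rightarrow> nat \<Rightarrow> (real \<Rightarrow> int \<Rightarrow> real) \<Rightarrow> bool" where
  "mf_solution a b M u \<longleftrightarrow>
     (\<forall>t\<ge>0. \<forall>x. 0 \<le> u t x \<and> u t x \<le> 1) \<and>
     (\<forall>x. \<forall>t\<ge>0. ((\<lambda>s. u s x) has_real_derivative mf_rhs a b M (u t) x) (at t within {0..}))"

definition u_minus :: "real \<Rightarrow> real" where
  "u_minus r = 1/2 - sqrt (1/4 - 1/r)"

definition u_plus :: "real \<Rightarrow> real" where
  "u_plus r = 1/2 + sqrt (1/4 - 1/r)"

definition expansion :: "real \<Rightarrow> real \<Rightarrow> nat \<Rightarrow> bool" where
  "expansion a b M \<longleftrightarrow> a + b > 4 \<and>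
     (\<exists>u. u_minus (a+b) < u \<and> u < u_plus (a+b) \<and>
        (\<exists>sol. mf_solution a b M sol \<and> (\<forall>x. sol 0 x = (if x \<le> 0 then u else 0)) \<and>
               (\<exists>t0>0. sol t0 1 = u)))"

definition retreat :: "real \<Rightarrow> real \<Rightarrow> nat \<Rightarrow> bool" where
  "retreat a b M \<longleftrightarrow> a + b < 4 \<or>
     (a + b \<ge> 4 \<and>
      (\<exists>us uS. 0 < us \<and> us < u_minus (a+b) \<and> u_minus (a+b) \<le> u_plus (a+b) \<and>
          u_plus (a+b) < uS \<and> uS \<le> 1 \<and>
        (\<exists>sol. mf_solution a b M sol \<and> (\<forall>x. sol 0 x = (if x < 0 then uS else us)) \<and>
               (\<exists>t0>0. sol t0 (-1) = us))))"

end

theory Submission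
  imports Defs "HOL-Analysis.Analysis"
begin


lemma nbrs_shift: "nbrs M (x + k) = (\<lambda>y. y + k) ` nbrs M x"
proof -
  have "(\<lambda>y. y + k) ` nbrs M x = {z. \<exists>y. z = y + k \<and> y \<in> nbrs M x}" by auto
  also have "\<dots> = nbrs M (x + k)"
    unfolding nbrs_def by (auto intro: exI[of _ "_ - k"])
  finally show ?thesis by simp
qed

lemma nbrs_refl: "nbrs M (- x) = uminus ` nbrs M x"
proof -
  have "uminus ` nbrs M x = {z. \<exists>y. z = - y \<and> y \<in> nbrs M x}" by auto
  also have "\<dots> = nbrs M (- x)"
    unfolding nbrs_def by (auto intro: exI[of _ "- _"])
  finally show ?thesis by simp
qed

lemma nbrs_finite: "finite (nbrs M x)" unfolding nbrs_def by simp

lemma nbrs_card: "card (nbrs M x) = 2 * M"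
proof -
  have "card {x - int M .. x + int M} = 2 * M + 1" by simp
  moreover have "x \<in> {x - int M .. x + int M}" by simp
  ultimately show ?thesis unfolding nbrs_def by (simp add: card_Diff_singleton)
qed

lemma nbrs_dist: "y \<in> nbrs M x \<Longrightarrow> \<bar>y - x\<bar> \<le> int M"
  unfolding nbrs_def by auto

lemma rhs_shift: "mf_rhs a b M (\<lambda>y. v (y + k)) x = mf_rhs a b M v (x + k)"
proof -
  have "(\<Sum>y\<in>nbrs M (x + k). (v y)\<^sup>2) = (\<Sum>y\<in>nbrs M x. (v (y + k))\<^sup>2)"
    unfolding nbrs_shift by (subst sum.reindex) (auto simp: inj_on_def)
  then show ?thesis unfolding mf_rhs_def by simp
qed

lemma rhs_refl: "mf_rhs a b M (\<lambda>y. v (- y)) x = mf_rhs a b M v (- x)"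
proof -
  have "(\<Sum>y\<in>nbrs M (- x). (v y)\<^sup>2) = (\<Sum>y\<in>nbrs M x. (v (- y))\<^sup>2)"
    unfolding nbrs_refl by (subst sum.reindex) (auto simp: inj_on_def)
  then show ?thesis unfolding mf_rhs_def by simp
qed

lemma rhs_const:
  assumes "M \<ge> 1"
  shows "mf_rhs a b M (\<lambda>y. m) x = (a + b) * m\<^sup>2 * (1 - m) - m"
proof -
  have "(\<Sum>y\<in>nbrs M x. m\<^sup>2) = real (card (nbrs M x)) * m\<^sup>2" by simp
  also have "\<dots> = 2 * real M * m\<^sup>2" by (simp add: nbrs_card)
  finally have e: "(\<Sum>y\<in>nbrs M x. m\<^sup>2) = 2 * real M * m\<^sup>2" .
  show ?thesis using assms unfolding mf_rhs_def e by (simp add: field_simps)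
qed

lemma sol_shift:
  assumes "mf_solution a b M v"
  shows "mf_solution a b M (\<lambda>t x. v t (x + k))"
  using assms unfolding mf_solution_def by (simp add: rhs_shift)

lemma sol_refl:
  assumes "mf_solution a b M v"
  shows "mf_solution a b M (\<lambda>t x. v t (- x))"
  using assms unfolding mf_solution_def by (simp add: rhs_refl)

lemma sol_time:
  assumes "mf_solution a b M v" "0 \<le> s"
  shows "mf_solution a b M (\<lambda>t x. v (s + t) x)"
  unfolding mf_solution_def
proof (intro conjI allI impI)
  fix t :: real and x assume t: "0 \<le> t"
  then show "0 \<le> v (s + t) x" "v (s + t) x \<le> 1" using assms unfolding mf_solution_def by auto
next
  fix x and t :: real assume t: "0 \<le> t"
  have d: "((\<lambda>s'. v s' x) has_real_derivative mf_rhs a b M (v (s + t)) x) (at (s + t) within {0..})"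
    using assms t unfolding mf_solution_def by auto
  have d2: "((\<lambda>s'. v s' x) has_real_derivative mf_rhs a b M (v (s + t)) x) (at ((\<lambda>t. s + t) t) within ((\<lambda>t. s + t) ` {0..}))"
    by (rule has_field_derivative_subset[OF d]) (use assms in auto)
  have d3: "((\<lambda>t. s + t) has_real_derivative 1) (at t within {0..})"
    by (auto intro!: derivative_eq_intros)
  from DERIV_image_chain[OF d2 d3]
  show "((\<lambda>t. v (s + t) x) has_real_derivative mf_rhs a b M (v (s + t)) x) (at t within {0..})"
    by (simp add: o_def)
qed

lemma deriv_touch:
  fixes g :: "real \<Rightarrow> real"
  assumes "(g has_real_derivative D) (at t within {0..})" "0 < t" "g t = 0"
    "\<forall>s\<in>{0..<t}. g s > 0"
  shows "D \<le> 0"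
proof (rule ccontr)
  assume "\<not> D \<le> 0"
  then have "D > 0" by simp
  from has_real_derivative_pos_inc_left[OF assms(1) this] obtain d where
    d: "d > 0" "\<forall>h>0. t - h \<in> {0..} \<longrightarrow> h < d \<longrightarrow> g (t - h) < g t" by blast
  define h where "h = min d t / 2"
  have h: "h > 0" "h < d" "h < t" using d assms(2) by (auto simp: h_def)
  then have "g (t - h) < 0" using d assms(3) by auto
  moreover have "g (t - h) > 0" using assms(4) h by auto
  ultimately show False by simp
qed



lemma touch:
  fixes lo hi :: "real \<Rightarrow> int \<Rightarrow> real" and T :: real and R :: int
  assumes cl: "\<forall>x. continuous_on {0..T} (\<lambda>t. lo t x)"
    and ch: "\<forall>x. continuous_on {0..T} (\<lambda>t. hi t x)"
    and init: "\<forall>x. lo 0 x < hi 0 x"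
    and far: "\<forall>t\<in>{0..T}. \<forall>x. R < \<bar>x\<bar> \<longrightarrow> lo t x < hi t x"
    and step: "\<forall>t\<in>{0<..T}. \<forall>x. (\<forall>y. lo t y \<le> hi t y) \<longrightarrow> lo t x = hi t x \<longrightarrow>
                 (\<forall>s\<in>{0..<t}. lo s x < hi s x) \<longrightarrow> False"
  shows "\<forall>t\<in>{0..T}. \<forall>x. lo t x < hi t x"
proof (rule ccontr)
  assume neg: "\<not> ?thesis"
  define S where "S x = {0..T} \<inter> (\<lambda>t. hi t x - lo t x) -` {..0}" for x
  define B where "B = (\<Union>x\<in>{-R..R}. S x)"
  have cS: "closed (S x)" for x
    unfolding S_def by (rule continuous_closed_preimage)
      (use cl ch in \<open>auto intro!: continuous_intros\<close>)
  have cB: "closed B" unfolding B_def using cS by (intro closed_UN) auto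
  have B_iff: "t \<in> B \<longleftrightarrow> t \<in> {0..T} \<and> (\<exists>x. hi t x \<le> lo t x)" for t
  proof
    assume "t \<in> B" then show "t \<in> {0..T} \<and> (\<exists>x. hi t x \<le> lo t x)"
      unfolding B_def S_def by auto
  next
    assume a: "t \<in> {0..T} \<and> (\<exists>x. hi t x \<le> lo t x)"
    then obtain x where x: "hi t x \<le> lo t x" by auto
    have "\<bar>x\<bar> \<le> R" using far a x by (meson leD not_le)
    then show "t \<in> B" using a x unfolding B_def S_def by (intro UN_I[of x]) auto
  qed
  have ne: "B \<noteq> {}" using neg B_iff by (auto simp: not_less)
  have bb: "bdd_below B" unfolding B_def S_def by (auto intro!: bdd_belowI[of _ 0])
  define ts where "ts = Inf B"
  have tsB: "ts \<in> B" unfolding ts_def using closed_contains_Inf[OF ne bb cB] .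
  then obtain x where x: "hi ts x \<le> lo ts x" and tsT: "ts \<in> {0..T}" using B_iff by auto
  have ts0: "ts > 0"
  proof (rule ccontr)
    assume "\<not> ts > 0" then have "ts = 0" using tsT by auto
    then show False using x init by (simp add: not_less[symmetric])
  qed
  have before: "lo s y < hi s y" if "s \<in> {0..<ts}" for s y
  proof (rule ccontr)
    assume "\<not> lo s y < hi s y"
    then have "s \<in> B" using B_iff that tsT by (auto simp: not_less)
    then have "ts \<le> s" unfolding ts_def using bb by (simp add: cInf_lower)
    then show False using that by auto
  qed
  have at: "lo ts y \<le> hi ts y" for y
  proof -
    define C where "C = {0..ts} \<inter> (\<lambda>t. hi t y - lo t y) -` {0..}"
    have c1: "continuous_on {0..ts} (\<lambda>t. hi t y)" "continuous_on {0..ts} (\<lambda>t. lo t y)"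
      using cl ch tsT by (meson atLeastAtMost_iff atLeastatMost_subset_iff continuous_on_subset order_refl)+
    have "closed C" unfolding C_def
      by (rule continuous_closed_preimage) (use c1 in \<open>auto intro!: continuous_intros\<close>)
    moreover have "{0..<ts} \<subseteq> C" unfolding C_def using before by (auto simp: less_imp_le)
    ultimately have "closure {0..<ts} \<subseteq> C" by (simp add: closure_minimal)
    then have "ts \<in> C" using ts0 by auto
    then show ?thesis unfolding C_def by auto
  qed
  have "lo ts x = hi ts x" using at[of x] x by auto
  moreover have "ts \<in> {0<..T}" using tsT ts0 by auto
  ultimately show False using step at before by blast
qed



lemma qp_ub:
  fixes p q :: real
  assumes "0 \<le> p" "p \<le> 1" "0 \<le> q" "q \<le> 1"
  shows "q + p - q\<^sup>2 - q * p - p\<^sup>2 \<le> 1"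
proof -
  have "(q - 1/2)\<^sup>2 \<ge> 0" "(p - 1/2)\<^sup>2 \<ge> 0" "q * p \<ge> 0" using assms by auto
  then show ?thesis by (simp add: power2_eq_square algebra_simps)
qed

lemma qp_lb:
  fixes p q :: real
  assumes "0 \<le> p" "p \<le> 1" "0 \<le> q" "q \<le> 1"
  shows "q + p - q\<^sup>2 - q * p - p\<^sup>2 \<ge> -1"
proof -
  have "q * (1 - q) \<ge> 0" "p * (1 - p) \<ge> 0" "q * p \<le> 1" using assms by (auto simp: mult_le_one)
  then show ?thesis by (simp add: power2_eq_square algebra_simps)
qed

lemma cube_lip:
  fixes p q :: real
  assumes "0 \<le> p" "p \<le> q" "q \<le> 1"
  shows "q\<^sup>2 * (1 - q) - p\<^sup>2 * (1 - p) \<le> q - p"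
proof -
  have "q\<^sup>2 * (1 - q) - p\<^sup>2 * (1 - p) = (q - p) * (q + p - q\<^sup>2 - q * p - p\<^sup>2)"
    by (simp add: power2_eq_square algebra_simps)
  also have "\<dots> \<le> (q - p) * 1"
    by (rule mult_left_mono[OF qp_ub]) (use assms in auto)
  finally show ?thesis by simp
qed

lemma cube_lip2:
  fixes p q :: real
  assumes "0 \<le> p" "p \<le> q" "q \<le> 1"
  shows "p - q \<le> q\<^sup>2 * (1 - q) - p\<^sup>2 * (1 - p)"
proof -
  have "q\<^sup>2 * (1 - q) - p\<^sup>2 * (1 - p) = (q - p) * (q + p - q\<^sup>2 - q * p - p\<^sup>2)"
    by (simp add: power2_eq_square algebra_simps)
  also have "\<dots> \<ge> (q - p) * (-1)"
    by (rule mult_left_mono[OF qp_lb]) (use assms in auto)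
  finally show ?thesis by simp
qed

lemma sq_diff_lb:
  fixes p q E :: real
  assumes "0 \<le> p" "p \<le> 1" "0 \<le> q" "q \<le> 1" "q - p \<le> E" "0 \<le> E"
  shows "p\<^sup>2 - q\<^sup>2 \<ge> - 2 * E"
proof (cases "p \<ge> q")
  case True then have "q\<^sup>2 \<le> p\<^sup>2" using assms by (intro power_mono) auto
  then show ?thesis using assms by linarith
next
  case False
  have "p\<^sup>2 - q\<^sup>2 = (p - q) * (p + q)" by (simp add: power2_eq_square algebra_simps)
  also have "\<dots> \<ge> (p - q) * 2" using False assms by (intro mult_left_mono_neg) auto
  finally show ?thesis using assms by (simp add: algebra_simps)
qed

lemma est_sub:
  fixes v B :: "int \<Rightarrow> real"
  assumes ab: "a > 0" "b > 0" "M \<ge> 1"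
    and v01: "\<forall>y. 0 \<le> v y \<and> v y \<le> 1" and B01: "\<forall>y. 0 \<le> B y \<and> B y \<le> 1"
    and E: "0 \<le> E" and own: "v x \<le> B x" "B x - v x \<le> E"
    and nb: "\<forall>y\<in>nbrs M x. B y - v y \<le> E"
  shows "mf_rhs a b M v x \<ge> mf_rhs a b M B x - (a + 1 + 2 * b) * E"
proof -
  define Sv where "Sv = (\<Sum>y\<in>nbrs M x. (v y)\<^sup>2)"
  define SB where "SB = (\<Sum>y\<in>nbrs M x. (B y)\<^sup>2)"
  define k where "k = b / (2 * real M)"
  have k: "k > 0" "k * (2 * real M) = b" using ab by (auto simp: k_def)
  have SB0: "SB \<ge> 0" unfolding SB_def by (auto intro: sum_nonneg)
  have "Sv - SB = (\<Sum>y\<in>nbrs M x. (v y)\<^sup>2 - (B y)\<^sup>2)" unfolding Sv_def SB_def by (simp add: sum_subtractf)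
  also have "\<dots> \<ge> (\<Sum>y\<in>nbrs M x. - 2 * E)"
    using v01 B01 nb E by (intro sum_mono sq_diff_lb) auto
  finally have SS: "Sv - SB \<ge> - 2 * E * (2 * real M)" by (simp add: nbrs_card algebra_simps)
  have x01: "0 \<le> v x" "v x \<le> 1" "0 \<le> B x" "B x \<le> 1" using v01 B01 by auto
  have p1: "a * ((v x)\<^sup>2 * (1 - v x)) - a * ((B x)\<^sup>2 * (1 - B x)) \<ge> - a * E"
  proof -
    have "(v x)\<^sup>2 * (1 - v x) - (B x)\<^sup>2 * (1 - B x) \<ge> v x - B x"
      using cube_lip[of "v x" "B x"] x01 own by linarith
    then have "a * ((v x)\<^sup>2 * (1 - v x) - (B x)\<^sup>2 * (1 - B x)) \<ge> a * (v x - B x)"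
      using ab by (intro mult_left_mono) auto
    moreover have "a * (v x - B x) \<ge> a * (- E)" using ab own by (intro mult_left_mono) auto
    ultimately show ?thesis by (simp add: algebra_simps)
  qed
  have p3: "k * (Sv * (1 - v x)) - k * (SB * (1 - B x)) \<ge> - 2 * b * E"
  proof -
    have "Sv * (1 - v x) - SB * (1 - B x) = (Sv - SB) * (1 - v x) + SB * (B x - v x)"
      by (simp add: algebra_simps)
    also have "\<dots> \<ge> (Sv - SB) * (1 - v x)" using SB0 own by simp
    also have "(Sv - SB) * (1 - v x) \<ge> - 2 * E * (2 * real M)"
    proof (cases "Sv - SB \<ge> 0")
      case True
      have "(Sv - SB) * (1 - v x) \<ge> 0" using True x01 by simp
      moreover have "2 * E * (2 * real M) \<ge> 0" using E by simp
      ultimately show ?thesis by linarith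
    next
      case False
      have "(Sv - SB) * (1 - v x) \<ge> (Sv - SB) * 1" using False x01 by (intro mult_left_mono_neg) auto
      then show ?thesis using SS by simp
    qed
    finally have "Sv * (1 - v x) - SB * (1 - B x) \<ge> - 2 * E * (2 * real M)" .
    then have "k * (Sv * (1 - v x) - SB * (1 - B x)) \<ge> k * (- 2 * E * (2 * real M))"
      using k by (intro mult_left_mono) auto
    also have "k * (- 2 * E * (2 * real M)) = - 2 * b * E" using k(2) by (simp add: algebra_simps)
    finally show ?thesis by (simp add: algebra_simps)
  qed
  have "mf_rhs a b M v x = a * ((v x)\<^sup>2 * (1 - v x)) + k * (Sv * (1 - v x)) - v x"
    unfolding mf_rhs_def Sv_def k_def by (simp add: field_simps)
  moreover have "mf_rhs a b M B x = a * ((B x)\<^sup>2 * (1 - B x)) + k * (SB * (1 - B x)) - B x"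
    unfolding mf_rhs_def SB_def k_def by (simp add: field_simps)
  ultimately show ?thesis using p1 p3 own by (simp add: algebra_simps)
qed

lemma sq_diff_ub:
  fixes p q E :: real
  assumes "0 \<le> p" "p \<le> 1" "0 \<le> q" "q \<le> 1" "p - q \<le> E" "0 \<le> E"
  shows "p\<^sup>2 - q\<^sup>2 \<le> 2 * E"
proof (cases "p \<le> q")
  case True then have "p\<^sup>2 \<le> q\<^sup>2" using assms by (intro power_mono) auto
  then show ?thesis using assms by linarith
next
  case False
  have "p\<^sup>2 - q\<^sup>2 = (p - q) * (p + q)" by (simp add: power2_eq_square algebra_simps)
  also have "\<dots> \<le> (p - q) * 2" using False assms by (intro mult_left_mono) auto
  finally show ?thesis using assms by (simp add: algebra_simps)
qed

lemma est_super:
  fixes v B :: "int \<Rightarrow> real"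
  assumes ab: "a > 0" "b > 0" "M \<ge> 1"
    and v01: "\<forall>y. 0 \<le> v y \<and> v y \<le> 1" and B01: "\<forall>y. 0 \<le> B y \<and> B y \<le> 1"
    and E: "0 \<le> E" and own: "B x \<le> v x" "v x - B x \<le> E"
    and nb: "\<forall>y\<in>nbrs M x. v y - B y \<le> E"
  shows "mf_rhs a b M v x \<le> mf_rhs a b M B x + (a + 1 + 2 * b) * E"
proof -
  define Sv where "Sv = (\<Sum>y\<in>nbrs M x. (v y)\<^sup>2)"
  define SB where "SB = (\<Sum>y\<in>nbrs M x. (B y)\<^sup>2)"
  define k where "k = b / (2 * real M)"
  have k: "k > 0" "k * (2 * real M) = b" using ab by (auto simp: k_def)
  have SB0: "SB \<ge> 0" unfolding SB_def by (auto intro: sum_nonneg)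
  have "Sv - SB = (\<Sum>y\<in>nbrs M x. (v y)\<^sup>2 - (B y)\<^sup>2)" unfolding Sv_def SB_def by (simp add: sum_subtractf)
  also have "\<dots> \<le> (\<Sum>y\<in>nbrs M x. 2 * E)"
    using v01 B01 nb E by (intro sum_mono sq_diff_ub) auto
  finally have SS: "Sv - SB \<le> 2 * E * (2 * real M)" by (simp add: nbrs_card algebra_simps)
  have x01: "0 \<le> v x" "v x \<le> 1" "0 \<le> B x" "B x \<le> 1" using v01 B01 by auto
  have p1: "a * ((v x)\<^sup>2 * (1 - v x)) - a * ((B x)\<^sup>2 * (1 - B x)) \<le> a * E"
  proof -
    have "(v x)\<^sup>2 * (1 - v x) - (B x)\<^sup>2 * (1 - B x) \<le> v x - B x"
      using cube_lip[of "B x" "v x"] x01 own by linarith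
    then have "a * ((v x)\<^sup>2 * (1 - v x) - (B x)\<^sup>2 * (1 - B x)) \<le> a * (v x - B x)"
      using ab by (intro mult_left_mono) auto
    moreover have "a * (v x - B x) \<le> a * E" using ab own by (intro mult_left_mono) auto
    ultimately show ?thesis by (simp add: algebra_simps)
  qed
  have p3: "k * (Sv * (1 - v x)) - k * (SB * (1 - B x)) \<le> 2 * b * E"
  proof -
    have "Sv * (1 - v x) - SB * (1 - B x) = (Sv - SB) * (1 - v x) + SB * (B x - v x)"
      by (simp add: algebra_simps)
    also have "\<dots> \<le> (Sv - SB) * (1 - v x)" using SB0 own by (simp add: mult_nonneg_nonpos)
    also have "(Sv - SB) * (1 - v x) \<le> 2 * E * (2 * real M)"
    proof (cases "Sv - SB \<ge> 0")
      case True
      have "(Sv - SB) * (1 - v x) \<le> (Sv - SB) * 1" using True x01 by (intro mult_left_mono) auto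
      then show ?thesis using SS by simp
    next
      case False
      have "(Sv - SB) * (1 - v x) \<le> 0" using False x01 by (simp add: mult_nonpos_nonneg)
      moreover have "2 * E * (2 * real M) \<ge> 0" using E by simp
      ultimately show ?thesis by linarith
    qed
    finally have "Sv * (1 - v x) - SB * (1 - B x) \<le> 2 * E * (2 * real M)" .
    then have "k * (Sv * (1 - v x) - SB * (1 - B x)) \<le> k * (2 * E * (2 * real M))"
      using k by (intro mult_left_mono) auto
    also have "k * (2 * E * (2 * real M)) = 2 * b * E" using k(2) by (simp add: algebra_simps)
    finally show ?thesis by (simp add: algebra_simps)
  qed
  have "mf_rhs a b M v x = a * ((v x)\<^sup>2 * (1 - v x)) + k * (Sv * (1 - v x)) - v x"
    unfolding mf_rhs_def Sv_def k_def by (simp add: field_simps)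
  moreover have "mf_rhs a b M B x = a * ((B x)\<^sup>2 * (1 - B x)) + k * (SB * (1 - B x)) - B x"
    unfolding mf_rhs_def SB_def k_def by (simp add: field_simps)
  ultimately show ?thesis using p1 p3 own by (simp add: algebra_simps)
qed



lemma exp_abs_ratio:
  assumes "y \<in> nbrs M x"
  shows "exp \<bar>real_of_int y\<bar> \<le> exp (real M) * exp \<bar>real_of_int x\<bar>"
proof -
  have "\<bar>y - x\<bar> \<le> int M" using nbrs_dist[OF assms] .
  then have "\<bar>real_of_int y\<bar> \<le> real M + \<bar>real_of_int x\<bar>" by linarith
  then show ?thesis by (simp add: exp_add[symmetric])
qed

lemma eps_lim:
  fixes A k :: real
  assumes "k > 0" "\<forall>\<epsilon>>0. A < \<epsilon> * k"
  shows "A \<le> 0"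
proof (rule ccontr)
  assume "\<not> A \<le> 0"
  then have "A / k > 0" using assms by simp
  then have "A < (A / k) * k" using assms by blast
  then show False using assms by simp
qed

lemma deriv_cont_on:
  assumes "\<forall>t\<in>{0..T}. ((f::real\<Rightarrow>real) has_real_derivative f' t) (at t within {0..})"
  shows "continuous_on {0..T} f"
proof -
  have "continuous (at t within {0..T}) f" if "t \<in> {0..T}" for t
    using DERIV_continuous[OF assms[rule_format, OF that]]
    by (rule continuous_within_subset) auto
  then show ?thesis by (simp add: continuous_on_eq_continuous_within)
qed

lemma sol_cont:
  assumes "mf_solution a b M v"
  shows "continuous_on {0..T} (\<lambda>t. v t x)"
  by (rule deriv_cont_on[of _ _ "\<lambda>t. mf_rhs a b M (v t) x"]) (use assms in \<open>auto simp: mf_solution_def\<close>)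

lemma cmp_sub:
  fixes v B B' :: "real \<Rightarrow> int \<Rightarrow> real" and h :: "int \<Rightarrow> real"
  assumes ab: "a > 0" "b > 0" "M \<ge> 1" and sol: "mf_solution a b M v" and T: "0 \<le> T"
    and B01: "\<forall>t\<in>{0..T}. \<forall>x. 0 \<le> B t x \<and> B t x \<le> 1"
    and Bd: "\<forall>t\<in>{0..T}. \<forall>x. ((\<lambda>s. B s x) has_real_derivative B' t x) (at t within {0..})"
    and Bsub: "\<forall>t\<in>{0..T}. \<forall>x. B' t x \<le> mf_rhs a b M (B t) x"
    and h0: "\<forall>x. 0 \<le> h x" and hr: "\<forall>x. \<forall>y\<in>nbrs M x. h y \<le> exp (real M) * h x"
    and lam: "(a + 1 + 2 * b) * exp (real M) < l"
    and init: "\<forall>x. B 0 x - h x \<le> v 0 x"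
  shows "\<forall>t\<in>{0..T}. \<forall>x. B t x - exp (l * t) * h x \<le> v t x"
proof -
  define K where "K = (a + 1 + 2 * b)"
  have K0: "K > 0" using ab by (simp add: K_def)
  have "K * exp (real M) > 0" using K0 by simp
  then have lam0: "l > 0" using lam unfolding K_def by linarith
  have v01: "\<forall>t\<ge>0. \<forall>x. 0 \<le> v t x \<and> v t x \<le> 1" using sol by (simp add: mf_solution_def)
  have vd: "\<forall>x. \<forall>t\<ge>0. ((\<lambda>s. v s x) has_real_derivative mf_rhs a b M (v t) x) (at t within {0..})"
    using sol by (simp add: mf_solution_def)
  have strict: "B t x - exp (l * t) * (h x + \<epsilon> * exp \<bar>real_of_int x\<bar>) < v t x"
    if eps: "\<epsilon> > 0" and t: "t \<in> {0..T}" for \<epsilon> t x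
  proof -
    define he where "he x = h x + \<epsilon> * exp \<bar>real_of_int x\<bar>" for x
    have he0: "he x > 0" for x using h0 eps unfolding he_def by (smt (verit) exp_gt_zero mult_pos_pos)
    have her: "he y \<le> exp (real M) * he x" if "y \<in> nbrs M x" for x y
    proof -
      have "\<epsilon> * exp \<bar>real_of_int y\<bar> \<le> \<epsilon> * (exp (real M) * exp \<bar>real_of_int x\<bar>)"
        using exp_abs_ratio[OF that] eps by (intro mult_left_mono) auto
      moreover have "h y \<le> exp (real M) * h x" using hr that by auto
      ultimately show ?thesis unfolding he_def by (simp add: algebra_simps)
    qed
    define lo where "lo t x = B t x - exp (l * t) * he x" for t x
    have lod: "((\<lambda>s. lo s x) has_real_derivative (B' t x - l * exp (l * t) * he x)) (at t within {0..})"
      if "t \<in> {0..T}" for t x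
      unfolding lo_def using Bd that
      by (auto intro!: derivative_eq_intros simp: algebra_simps)
    have "\<forall>t\<in>{0..T}. \<forall>x. lo t x < v t x"
    proof (rule touch[where R = "\<lceil>1 / \<epsilon>\<rceil>"])
      show "\<forall>x. continuous_on {0..T} (\<lambda>t. lo t x)"
      proof
        fix x show "continuous_on {0..T} (\<lambda>t. lo t x)"
          using lod by (intro deriv_cont_on[of _ _ "\<lambda>t. B' t x - l * exp (l * t) * he x"]) auto
      qed
      show "\<forall>x. continuous_on {0..T} (\<lambda>t. v t x)" using sol_cont[OF sol] by auto
      show "\<forall>x. lo 0 x < v 0 x"
      proof
        fix x
        have "\<epsilon> * exp \<bar>real_of_int x\<bar> > 0" using eps by simp
        then show "lo 0 x < v 0 x" using init[rule_format, of x] unfolding lo_def he_def by simp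
      qed
      show "\<forall>t\<in>{0..T}. \<forall>x. \<lceil>1 / \<epsilon>\<rceil> < \<bar>x\<bar> \<longrightarrow> lo t x < v t x"
      proof (intro ballI allI impI)
        fix t x assume t: "t \<in> {0..T}" and x: "\<lceil>1 / \<epsilon>\<rceil> < \<bar>x\<bar>"
        have "1 / \<epsilon> < \<bar>real_of_int x\<bar>" using x by linarith
        then have "1 < \<epsilon> * \<bar>real_of_int x\<bar>" using eps by (simp add: field_simps)
        also have "\<dots> \<le> \<epsilon> * exp \<bar>real_of_int x\<bar>"
          using eps by (intro mult_left_mono) (auto intro: order_trans[OF _ exp_ge_add_one_self])
        also have "\<dots> \<le> he x" using h0 unfolding he_def by simp
        also have "\<dots> \<le> exp (l * t) * he x" using he0[of x] lam0 t by simp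
        finally have "1 < exp (l * t) * he x" .
        moreover have "B t x \<le> 1" using B01 t by auto
        moreover have "v t x \<ge> 0" using v01 t by auto
        ultimately show "lo t x < v t x" unfolding lo_def by linarith
      qed
      show "\<forall>t\<in>{0<..T}. \<forall>x. (\<forall>y. lo t y \<le> v t y) \<longrightarrow> lo t x = v t x \<longrightarrow>
                 (\<forall>s\<in>{0..<t}. lo s x < v s x) \<longrightarrow> False"
      proof (intro ballI allI impI)
        fix t x assume t: "t \<in> {0<..T}" and le: "\<forall>y. lo t y \<le> v t y" and eq: "lo t x = v t x"
          and bef: "\<forall>s\<in>{0..<t}. lo s x < v s x"
        have tT: "t \<in> {0..T}" using t by auto
        define E where "E = exp (l * t) * (exp (real M) * he x)"
        have E0: "E \<ge> 0" unfolding E_def using he0[of x] by simp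
        have "exp (l * t) * he x > 0" using he0[of x] by simp
        then have own1: "v t x \<le> B t x" using eq unfolding lo_def by linarith
        have own2: "B t x - v t x \<le> E"
        proof -
          have "B t x - v t x = exp (l * t) * he x" using eq unfolding lo_def by simp
          also have "\<dots> \<le> exp (l * t) * (exp (real M) * he x)"
            using he0[of x] by (intro mult_left_mono) auto
          finally show ?thesis unfolding E_def .
        qed
        have nb: "\<forall>y\<in>nbrs M x. B t y - v t y \<le> E"
        proof
          fix y assume y: "y \<in> nbrs M x"
          have "B t y - v t y \<le> exp (l * t) * he y" using le[rule_format, of y] unfolding lo_def by simp
          also have "\<dots> \<le> E" unfolding E_def using her[OF y] by (intro mult_left_mono) auto
          finally show "B t y - v t y \<le> E" .
        qed
        have est: "mf_rhs a b M (v t) x \<ge> mf_rhs a b M (B t) x - K * E"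
          unfolding K_def
          by (rule est_sub[OF ab]) (use v01 B01 tT E0 own1 own2 nb in auto)
        have gd: "((\<lambda>s. v s x - lo s x) has_real_derivative
                    (mf_rhs a b M (v t) x - (B' t x - l * exp (l * t) * he x))) (at t within {0..})"
          using vd lod[OF tT] tT by (auto intro!: derivative_eq_intros)
        have "mf_rhs a b M (v t) x - (B' t x - l * exp (l * t) * he x) \<le> 0"
          by (rule deriv_touch[OF gd]) (use t eq bef in auto)
        moreover have "K * E < l * exp (l * t) * he x"
        proof -
          have "K * E = (K * exp (real M)) * (exp (l * t) * he x)" unfolding E_def by (simp add: algebra_simps)
          also have "\<dots> < l * (exp (l * t) * he x)"
            using lam he0[of x] unfolding K_def by (intro mult_strict_right_mono) auto
          finally show ?thesis by (simp add: algebra_simps)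
        qed
        moreover have "B' t x \<le> mf_rhs a b M (B t) x" using Bsub tT by auto
        ultimately show False using est by linarith
      qed
    qed
    then show ?thesis using t unfolding lo_def he_def by auto
  qed
  show ?thesis
  proof (intro ballI allI)
    fix t x assume t: "t \<in> {0..T}"
    have "B t x - exp (l * t) * h x - v t x \<le> 0"
    proof (rule eps_lim[of "exp (l * t) * exp \<bar>real_of_int x\<bar>"])
      show "0 < exp (l * t) * exp \<bar>real_of_int x\<bar>" by simp
      show "\<forall>\<epsilon>>0. B t x - exp (l * t) * h x - v t x < \<epsilon> * (exp (l * t) * exp \<bar>real_of_int x\<bar>)"
      proof (intro allI impI)
        fix e :: real assume "e > 0"
        from strict[OF this t, of x]
        show "B t x - exp (l * t) * h x - v t x < e * (exp (l * t) * exp \<bar>real_of_int x\<bar>)"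
          by (simp add: algebra_simps)
      qed
    qed
    then show "B t x - exp (l * t) * h x \<le> v t x" by simp
  qed
qed

lemma cmp_super:
  fixes v B B' :: "real \<Rightarrow> int \<Rightarrow> real" and h :: "int \<Rightarrow> real"
  assumes ab: "a > 0" "b > 0" "M \<ge> 1" and sol: "mf_solution a b M v" and T: "0 \<le> T"
    and B01: "\<forall>t\<in>{0..T}. \<forall>x. 0 \<le> B t x \<and> B t x \<le> 1"
    and Bd: "\<forall>t\<in>{0..T}. \<forall>x. ((\<lambda>s. B s x) has_real_derivative B' t x) (at t within {0..})"
    and Bsub: "\<forall>t\<in>{0..T}. \<forall>x. B' t x \<ge> mf_rhs a b M (B t) x"
    and h0: "\<forall>x. 0 \<le> h x" and hr: "\<forall>x. \<forall>y\<in>nbrs M x. h y \<le> exp (real M) * h x"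
    and lam: "(a + 1 + 2 * b) * exp (real M) < l"
    and init: "\<forall>x. v 0 x \<le> B 0 x + h x"
  shows "\<forall>t\<in>{0..T}. \<forall>x. v t x \<le> B t x + exp (l * t) * h x"
proof -
  define K where "K = (a + 1 + 2 * b)"
  have K0: "K > 0" using ab by (simp add: K_def)
  have "K * exp (real M) > 0" using K0 by simp
  then have lam0: "l > 0" using lam unfolding K_def by linarith
  have v01: "\<forall>t\<ge>0. \<forall>x. 0 \<le> v t x \<and> v t x \<le> 1" using sol by (simp add: mf_solution_def)
  have vd: "\<forall>x. \<forall>t\<ge>0. ((\<lambda>s. v s x) has_real_derivative mf_rhs a b M (v t) x) (at t within {0..})"
    using sol by (simp add: mf_solution_def)
  have strict: "v t x < B t x + exp (l * t) * (h x + \<epsilon> * exp \<bar>real_of_int x\<bar>)"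
    if eps: "\<epsilon> > 0" and t: "t \<in> {0..T}" for \<epsilon> t x
  proof -
    define he where "he x = h x + \<epsilon> * exp \<bar>real_of_int x\<bar>" for x
    have he0: "he x > 0" for x using h0 eps unfolding he_def by (smt (verit) exp_gt_zero mult_pos_pos)
    have her: "he y \<le> exp (real M) * he x" if "y \<in> nbrs M x" for x y
    proof -
      have "\<epsilon> * exp \<bar>real_of_int y\<bar> \<le> \<epsilon> * (exp (real M) * exp \<bar>real_of_int x\<bar>)"
        using exp_abs_ratio[OF that] eps by (intro mult_left_mono) auto
      moreover have "h y \<le> exp (real M) * h x" using hr that by auto
      ultimately show ?thesis unfolding he_def by (simp add: algebra_simps)
    qed
    define lo where "lo t x = B t x + exp (l * t) * he x" for t x
    have lod: "((\<lambda>s. lo s x) has_real_derivative (B' t x + l * exp (l * t) * he x)) (at t within {0..})"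
      if "t \<in> {0..T}" for t x
      unfolding lo_def using Bd that
      by (auto intro!: derivative_eq_intros simp: algebra_simps)
    have "\<forall>t\<in>{0..T}. \<forall>x. v t x < lo t x"
    proof (rule touch[where R = "\<lceil>1 / \<epsilon>\<rceil>"])
      show "\<forall>x. continuous_on {0..T} (\<lambda>t. lo t x)"
      proof
        fix x show "continuous_on {0..T} (\<lambda>t. lo t x)"
          using lod by (intro deriv_cont_on[of _ _ "\<lambda>t. B' t x + l * exp (l * t) * he x"]) auto
      qed
      show "\<forall>x. continuous_on {0..T} (\<lambda>t. v t x)" using sol_cont[OF sol] by auto
      show "\<forall>x. v 0 x < lo 0 x"
      proof
        fix x
        have "\<epsilon> * exp \<bar>real_of_int x\<bar> > 0" using eps by simp
        then show "v 0 x < lo 0 x" using init[rule_format, of x] unfolding lo_def he_def by simp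
      qed
      show "\<forall>t\<in>{0..T}. \<forall>x. \<lceil>1 / \<epsilon>\<rceil> < \<bar>x\<bar> \<longrightarrow> v t x < lo t x"
      proof (intro ballI allI impI)
        fix t x assume t: "t \<in> {0..T}" and x: "\<lceil>1 / \<epsilon>\<rceil> < \<bar>x\<bar>"
        have "1 / \<epsilon> < \<bar>real_of_int x\<bar>" using x by linarith
        then have "1 < \<epsilon> * \<bar>real_of_int x\<bar>" using eps by (simp add: field_simps)
        also have "\<dots> \<le> \<epsilon> * exp \<bar>real_of_int x\<bar>"
          using eps by (intro mult_left_mono) (auto intro: order_trans[OF _ exp_ge_add_one_self])
        also have "\<dots> \<le> he x" using h0 unfolding he_def by simp
        also have "\<dots> \<le> exp (l * t) * he x" using he0[of x] lam0 t by simp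
        finally have "1 < exp (l * t) * he x" .
        moreover have "B t x \<ge> 0" using B01 t by auto
        moreover have "v t x \<le> 1" using v01 t by auto
        ultimately show "v t x < lo t x" unfolding lo_def by linarith
      qed
      show "\<forall>t\<in>{0<..T}. \<forall>x. (\<forall>y. v t y \<le> lo t y) \<longrightarrow> v t x = lo t x \<longrightarrow>
                 (\<forall>s\<in>{0..<t}. v s x < lo s x) \<longrightarrow> False"
      proof (intro ballI allI impI)
        fix t x assume t: "t \<in> {0<..T}" and le: "\<forall>y. v t y \<le> lo t y" and eq: "v t x = lo t x"
          and bef: "\<forall>s\<in>{0..<t}. v s x < lo s x"
        have tT: "t \<in> {0..T}" using t by auto
        define E where "E = exp (l * t) * (exp (real M) * he x)"
        have E0: "E \<ge> 0" unfolding E_def using he0[of x] by simp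
        have "exp (l * t) * he x > 0" using he0[of x] by simp
        then have own1: "B t x \<le> v t x" using eq unfolding lo_def by linarith
        have own2: "v t x - B t x \<le> E"
        proof -
          have "v t x - B t x = exp (l * t) * he x" using eq unfolding lo_def by simp
          also have "\<dots> \<le> exp (l * t) * (exp (real M) * he x)"
            using he0[of x] by (intro mult_left_mono) auto
          finally show ?thesis unfolding E_def .
        qed
        have nb: "\<forall>y\<in>nbrs M x. v t y - B t y \<le> E"
        proof
          fix y assume y: "y \<in> nbrs M x"
          have "v t y - B t y \<le> exp (l * t) * he y" using le[rule_format, of y] unfolding lo_def by simp
          also have "\<dots> \<le> E" unfolding E_def using her[OF y] by (intro mult_left_mono) auto
          finally show "v t y - B t y \<le> E" .
        qed
        have est: "mf_rhs a b M (v t) x \<le> mf_rhs a b M (B t) x + K * E"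
          unfolding K_def
          by (rule est_super[OF ab]) (use v01 B01 tT E0 own1 own2 nb in auto)
        have gd: "((\<lambda>s. lo s x - v s x) has_real_derivative
                    ((B' t x + l * exp (l * t) * he x) - mf_rhs a b M (v t) x)) (at t within {0..})"
          using vd lod[OF tT] tT by (auto intro!: derivative_eq_intros)
        have "(B' t x + l * exp (l * t) * he x) - mf_rhs a b M (v t) x \<le> 0"
          by (rule deriv_touch[OF gd]) (use t eq bef in auto)
        moreover have "K * E < l * exp (l * t) * he x"
        proof -
          have "K * E = (K * exp (real M)) * (exp (l * t) * he x)" unfolding E_def by (simp add: algebra_simps)
          also have "\<dots> < l * (exp (l * t) * he x)"
            using lam he0[of x] unfolding K_def by (intro mult_strict_right_mono) auto
          finally show ?thesis by (simp add: algebra_simps)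
        qed
        moreover have "B' t x \<ge> mf_rhs a b M (B t) x" using Bsub tT by auto
        ultimately show False using est by linarith
      qed
    qed
    then show ?thesis using t unfolding lo_def he_def by auto
  qed
  show ?thesis
  proof (intro ballI allI)
    fix t x assume t: "t \<in> {0..T}"
    have "v t x - (B t x + exp (l * t) * h x) \<le> 0"
    proof (rule eps_lim[of "exp (l * t) * exp \<bar>real_of_int x\<bar>"])
      show "0 < exp (l * t) * exp \<bar>real_of_int x\<bar>" by simp
      show "\<forall>\<epsilon>>0. v t x - (B t x + exp (l * t) * h x) < \<epsilon> * (exp (l * t) * exp \<bar>real_of_int x\<bar>)"
      proof (intro allI impI)
        fix e :: real assume "e > 0"
        from strict[OF this t, of x]
        show "v t x - (B t x + exp (l * t) * h x) < e * (exp (l * t) * exp \<bar>real_of_int x\<bar>)"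
          by (simp add: algebra_simps)
      qed
    qed
    then show "v t x \<le> B t x + exp (l * t) * h x" by simp
  qed
qed



definition ff :: "real \<Rightarrow> real \<Rightarrow> real" where
  "ff r s = r * s\<^sup>2 * (1 - s) - s"

lemma sol01: "mf_solution a b M v \<Longrightarrow> 0 \<le> t \<Longrightarrow> 0 \<le> v t x \<and> v t x \<le> 1"
  unfolding mf_solution_def by auto

lemma cmp_sol_sub:
  fixes v W :: "real \<Rightarrow> int \<Rightarrow> real" and h :: "int \<Rightarrow> real"
  assumes ab: "a > 0" "b > 0" "M \<ge> 1" and sol: "mf_solution a b M v" and solW: "mf_solution a b M W"
    and h0: "\<forall>x. 0 \<le> h x" and hr: "\<forall>x. \<forall>y\<in>nbrs M x. h y \<le> exp (real M) * h x"
    and lam: "(a + 1 + 2 * b) * exp (real M) < l"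
    and init: "\<forall>x. W 0 x - h x \<le> v 0 x" and t: "0 \<le> t"
  shows "W t x - exp (l * t) * h x \<le> v t x"
proof -
  have "\<forall>t\<in>{0..t}. \<forall>x. W t x - exp (l * t) * h x \<le> v t x"
    by (rule cmp_sub[where B = W and B' = "\<lambda>t x. mf_rhs a b M (W t) x", OF ab sol t])
      (use solW h0 hr lam init in \<open>auto simp: mf_solution_def\<close>)
  then show ?thesis using t by auto
qed

lemma cmp_sol_super:
  fixes v W :: "real \<Rightarrow> int \<Rightarrow> real" and h :: "int \<Rightarrow> real"
  assumes ab: "a > 0" "b > 0" "M \<ge> 1" and sol: "mf_solution a b M v" and solW: "mf_solution a b M W"
    and h0: "\<forall>x. 0 \<le> h x" and hr: "\<forall>x. \<forall>y\<in>nbrs M x. h y \<le> exp (real M) * h x"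
    and lam: "(a + 1 + 2 * b) * exp (real M) < l"
    and init: "\<forall>x. v 0 x \<le> W 0 x + h x" and t: "0 \<le> t"
  shows "v t x \<le> W t x + exp (l * t) * h x"
proof -
  have "\<forall>t\<in>{0..t}. \<forall>x. v t x \<le> W t x + exp (l * t) * h x"
    by (rule cmp_super[where B = W and B' = "\<lambda>t x. mf_rhs a b M (W t) x", OF ab sol t])
      (use solW h0 hr lam init in \<open>auto simp: mf_solution_def\<close>)
  then show ?thesis using t by auto
qed

lemma lamc: "(a + 1 + 2 * b) * exp (real M) < (a + 1 + 2 * b) * exp (real M) + 1" by simp

lemma mono_step:
  assumes ab: "a > 0" "b > 0" "M \<ge> 1" and solW: "mf_solution a b M W"
    and dec: "\<forall>x. W 0 (x + 1) \<le> W 0 x" and t: "0 \<le> t"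
  shows "W t (x + 1) \<le> W t x"
proof -
  have s1: "mf_solution a b M (\<lambda>t x. W t (x + 1))" by (rule sol_shift[OF solW])
  have "(\<lambda>t x. W t (x + 1)) t x - exp (((a + 1 + 2 * b) * exp (real M) + 1) * t) * (\<lambda>x. 0) x \<le> W t x"
    by (rule cmp_sol_sub[OF ab solW s1 _ _ lamc]) (use dec t in auto)
  then show ?thesis by simp
qed

lemma mono_sol:
  assumes ab: "a > 0" "b > 0" "M \<ge> 1" and solW: "mf_solution a b M W"
    and dec: "\<forall>x. W 0 (x + 1) \<le> W 0 x" and t: "0 \<le> t" and xy: "x \<le> y"
  shows "W t y \<le> W t x"
proof -
  have "W t (x + int n) \<le> W t x" for n
  proof (induction n)
    case 0 then show ?case by simp
  next
    case (Suc n)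
    have "W t (x + int n + 1) \<le> W t (x + int n)" by (rule mono_step[OF ab solW dec t])
    then show ?case using Suc by (simp add: algebra_simps)
  qed
  from this[of "nat (y - x)"] show ?thesis using xy by simp
qed

lemma lin_sub:
  fixes v :: "real \<Rightarrow> int \<Rightarrow> real" and h :: "int \<Rightarrow> real"
  assumes ab: "a > 0" "b > 0" "M \<ge> 1" and sol: "mf_solution a b M v" and T: "0 \<le> T"
    and base: "\<forall>t\<in>{0..T}. 0 \<le> \<alpha> + \<gamma> * t \<and> \<alpha> + \<gamma> * t \<le> 1 \<and> \<gamma> \<le> ff (a + b) (\<alpha> + \<gamma> * t)"
    and h0: "\<forall>x. 0 \<le> h x" and hr: "\<forall>x. \<forall>y\<in>nbrs M x. h y \<le> exp (real M) * h x"
    and lam: "(a + 1 + 2 * b) * exp (real M) < l"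
    and init: "\<forall>x. \<alpha> - h x \<le> v 0 x"
  shows "\<forall>t\<in>{0..T}. \<forall>x. \<alpha> + \<gamma> * t - exp (l * t) * h x \<le> v t x"
proof -
  have "\<forall>t\<in>{0..T}. \<forall>x. (\<lambda>t x. \<alpha> + \<gamma> * t) t x - exp (l * t) * h x \<le> v t x"
  proof (rule cmp_sub[where B = "\<lambda>t x. \<alpha> + \<gamma> * t" and B' = "\<lambda>t x. \<gamma>", OF ab sol T _ _ _ h0 hr lam])
    show "\<forall>t\<in>{0..T}. \<forall>x. ((\<lambda>s. \<alpha> + \<gamma> * s) has_real_derivative \<gamma>) (at t within {0..})"
      by (auto intro!: derivative_eq_intros)
    show "\<forall>t\<in>{0..T}. \<forall>x. \<gamma> \<le> mf_rhs a b M (\<lambda>y. \<alpha> + \<gamma> * t) x"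
      using base ab by (simp add: rhs_const ff_def)
  qed (use base init in auto)
  then show ?thesis by simp
qed

lemma lin_super:
  fixes v :: "real \<Rightarrow> int \<Rightarrow> real" and h :: "int \<Rightarrow> real"
  assumes ab: "a > 0" "b > 0" "M \<ge> 1" and sol: "mf_solution a b M v" and T: "0 \<le> T"
    and base: "\<forall>t\<in>{0..T}. 0 \<le> \<alpha> + \<gamma> * t \<and> \<alpha> + \<gamma> * t \<le> 1 \<and> ff (a + b) (\<alpha> + \<gamma> * t) \<le> \<gamma>"
    and h0: "\<forall>x. 0 \<le> h x" and hr: "\<forall>x. \<forall>y\<in>nbrs M x. h y \<le> exp (real M) * h x"
    and lam: "(a + 1 + 2 * b) * exp (real M) < l"
    and init: "\<forall>x. v 0 x \<le> \<alpha> + h x"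
  shows "\<forall>t\<in>{0..T}. \<forall>x. v t x \<le> \<alpha> + \<gamma> * t + exp (l * t) * h x"
proof -
  have "\<forall>t\<in>{0..T}. \<forall>x. v t x \<le> (\<lambda>t x. \<alpha> + \<gamma> * t) t x + exp (l * t) * h x"
  proof (rule cmp_super[where B = "\<lambda>t x. \<alpha> + \<gamma> * t" and B' = "\<lambda>t x. \<gamma>", OF ab sol T _ _ _ h0 hr lam])
    show "\<forall>t\<in>{0..T}. \<forall>x. ((\<lambda>s. \<alpha> + \<gamma> * s) has_real_derivative \<gamma>) (at t within {0..})"
      by (auto intro!: derivative_eq_intros)
    show "\<forall>t\<in>{0..T}. \<forall>x. mf_rhs a b M (\<lambda>y. \<alpha> + \<gamma> * t) x \<le> \<gamma>"
      using base ab by (simp add: rhs_const ff_def)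
  qed (use base init in auto)
  then show ?thesis by simp
qed

lemma ratio_p: "y \<in> nbrs M x \<Longrightarrow> exp (real_of_int y + c) \<le> exp (real M) * exp (real_of_int x + c)"
proof -
  assume "y \<in> nbrs M x"
  then have "\<bar>y - x\<bar> \<le> int M" by (rule nbrs_dist)
  then have "real_of_int y + c \<le> real M + (real_of_int x + c)" by linarith
  then show ?thesis by (simp add: exp_add[symmetric])
qed

lemma ratio_m: "y \<in> nbrs M x \<Longrightarrow> exp (- real_of_int y + c) \<le> exp (real M) * exp (- real_of_int x + c)"
proof -
  assume "y \<in> nbrs M x"
  then have "\<bar>y - x\<bar> \<le> int M" by (rule nbrs_dist)
  then have "- real_of_int y + c \<le> real M + (- real_of_int x + c)" by linarith
  then show ?thesis by (simp add: exp_add[symmetric])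
qed

lemma expM1: "1 \<le> exp (real M)" by simp

lemma ratio_two: "\<forall>x. \<forall>y\<in>nbrs M x. exp (real_of_int y + c) + exp (- real_of_int y + c)
    \<le> exp (real M) * (exp (real_of_int x + c) + exp (- real_of_int x + c))"
  using ratio_p ratio_m by (fastforce simp: distrib_left intro: add_mono)

lemma ratio_p_eta: "0 \<le> \<eta> \<Longrightarrow> \<forall>x. \<forall>y\<in>nbrs M x. exp (real_of_int y + c) + \<eta>
    \<le> exp (real M) * (exp (real_of_int x + c) + \<eta>)"
proof (intro allI ballI)
  fix x y assume e: "0 \<le> \<eta>" and y: "y \<in> nbrs M x"
  have "\<eta> \<le> exp (real M) * \<eta>" using e expM1[of M] by (simp add: mult_le_cancel_right1)
  then show "exp (real_of_int y + c) + \<eta> \<le> exp (real M) * (exp (real_of_int x + c) + \<eta>)"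
    using ratio_p[OF y, of c] by (simp add: distrib_left)
qed

lemma ratio_m_eta: "0 \<le> \<eta> \<Longrightarrow> \<forall>x. \<forall>y\<in>nbrs M x. exp (- real_of_int y + c) + \<eta>
    \<le> exp (real M) * (exp (- real_of_int x + c) + \<eta>)"
proof (intro allI ballI)
  fix x y assume e: "0 \<le> \<eta>" and y: "y \<in> nbrs M x"
  have "\<eta> \<le> exp (real M) * \<eta>" using e expM1[of M] by (simp add: mult_le_cancel_right1)
  then show "exp (- real_of_int y + c) + \<eta> \<le> exp (real M) * (exp (- real_of_int x + c) + \<eta>)"
    using ratio_m[OF y, of c] by (simp add: distrib_left)
qed



lemma cycle:
  fixes g :: "real \<Rightarrow> int \<Rightarrow> real" and N :: nat and Kmin K0 R3 :: int
  assumes t0: "t0 > 0" and tau: "\<tau> \<ge> 0" and Tc: "Tc = real N * t0 + \<tau>"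
    and N: "int N = R3 + 1" and zeta: "\<zeta> > 0" and Q: "Q \<ge> 1" and s0: "s0 \<ge> 0"
    and HW: "\<forall>s\<ge>s0. \<forall>p\<ge>Kmin. \<forall>\<eta>\<ge>\<zeta>. (\<forall>x. \<bar>x\<bar> \<le> p \<longrightarrow> lo - \<eta> \<le> g s x) \<longrightarrow>
               (\<forall>x. \<bar>x\<bar> \<le> p + 1 \<longrightarrow> lo - Q * \<eta> \<le> g (s + t0) x)"
    and HG: "\<forall>s\<ge>s0. \<forall>K\<ge>Kmin. (\<forall>x. \<bar>x\<bar> \<le> K \<longrightarrow> lv \<le> g s x) \<longrightarrow>
               (\<forall>x. \<bar>x\<bar> \<le> K - R3 \<longrightarrow> c \<le> g (s + \<tau>) x)"
    and lev1: "lv \<le> lo - Q ^ N * \<zeta>" and lev2: "lo - \<zeta> \<le> c"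
    and init: "\<forall>x. \<bar>x\<bar> \<le> K0 \<longrightarrow> c \<le> g s0 x" and K0: "Kmin \<le> K0"
  shows "\<forall>x. \<bar>x\<bar> \<le> K0 + int n \<longrightarrow> c \<le> g (s0 + real n * Tc) x"
proof (induction n)
  case 0 then show ?case using init by simp
next
  case (Suc n)
  define s where "s = s0 + real n * Tc"
  define K where "K = K0 + int n"
  have Tc0: "Tc \<ge> 0" using Tc t0 tau by simp
  have ss: "s \<ge> s0" unfolding s_def using Tc0 by simp
  have KK: "K \<ge> Kmin" unfolding K_def using K0 by simp
  have inner: "\<forall>x. \<bar>x\<bar> \<le> K + int j \<longrightarrow> lo - Q ^ j * \<zeta> \<le> g (s + real j * t0) x" if "j \<le> N" for j
    using that
  proof (induction j)
    case 0
    then show ?case using Suc.IH lev2 unfolding s_def K_def by force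
  next
    case (Suc j)
    then have ih: "\<forall>x. \<bar>x\<bar> \<le> K + int j \<longrightarrow> lo - Q ^ j * \<zeta> \<le> g (s + real j * t0) x" by simp
    have "Q ^ j \<ge> 1" using Q by simp
    then have eta: "Q ^ j * \<zeta> \<ge> \<zeta>" using zeta by simp
    have "real j * t0 \<ge> 0" using t0 by simp
    then have "s + real j * t0 \<ge> s0" using ss by linarith
    moreover have "K + int j \<ge> Kmin" using KK by simp
    ultimately have "\<forall>x. \<bar>x\<bar> \<le> K + int j + 1 \<longrightarrow> lo - Q * (Q ^ j * \<zeta>) \<le> g (s + real j * t0 + t0) x"
      using HW eta ih by blast
    then show ?case by (simp add: algebra_simps)
  qed
  have "\<forall>x. \<bar>x\<bar> \<le> K + int N \<longrightarrow> lv \<le> g (s + real N * t0) x"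
    using inner[of N] lev1 by fastforce
  moreover have "s + real N * t0 \<ge> s0" using ss t0 by (simp add: add_increasing2)
  moreover have "K + int N \<ge> Kmin" using KK by simp
  ultimately have "\<forall>x. \<bar>x\<bar> \<le> K + int N - R3 \<longrightarrow> c \<le> g (s + real N * t0 + \<tau>) x"
    using HG by blast
  moreover have "s + real N * t0 + \<tau> = s0 + real (Suc n) * Tc" unfolding s_def Tc by (simp add: algebra_simps)
  moreover have "K + int N - R3 = K0 + int (Suc n)" unfolding K_def using N by simp
  ultimately show ?case by simp
qed

lemma cycle_final:
  fixes g :: "real \<Rightarrow> int \<Rightarrow> real" and K0 R1 :: int
  assumes Tc: "Tc > 0" and K0: "K0 \<ge> 0" and R1: "R1 \<ge> 0"
    and cyc: "\<forall>n. \<forall>x. \<bar>x\<bar> \<le> K0 + int n \<longrightarrow> c \<le> g (s0 + real n * Tc) x"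
    and HH: "\<forall>n::nat. \<forall>K. (\<forall>x. \<bar>x\<bar> \<le> K \<longrightarrow> c \<le> g (s0 + real n * Tc) x) \<longrightarrow>
               (\<forall>t\<in>{0..Tc}. \<forall>x. \<bar>x\<bar> \<le> K - R1 \<longrightarrow> tg \<le> g (s0 + real n * Tc + t) x)"
    and t: "t \<ge> s0 + Tc * (real_of_int R1 + 1 + \<bar>real_of_int x\<bar>)"
  shows "tg \<le> g t x"
proof -
  define q where "q = (t - s0) / Tc"
  have q: "q \<ge> real_of_int R1 + 1 + \<bar>real_of_int x\<bar>" unfolding q_def using t Tc by (simp add: field_simps)
  define n where "n = nat \<lfloor>q\<rfloor>"
  have fl: "\<lfloor>q\<rfloor> \<ge> R1 + 1 + \<bar>x\<bar>" using q by (simp add: le_floor_iff)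
  then have "\<lfloor>q\<rfloor> \<ge> 0" using R1 by (smt (verit) abs_ge_zero)
  then have n: "int n = \<lfloor>q\<rfloor>" unfolding n_def by simp
  have "real n \<le> q" "q < real n + 1" using n by linarith+
  then have tn: "s0 + real n * Tc \<le> t" "t < s0 + real n * Tc + Tc" unfolding q_def using Tc
    by (simp_all add: field_simps)
  have xn: "\<bar>x\<bar> \<le> K0 + int n - R1" using fl n K0 by simp
  have "\<forall>t\<in>{0..Tc}. \<forall>x. \<bar>x\<bar> \<le> K0 + int n - R1 \<longrightarrow> tg \<le> g (s0 + real n * Tc + t) x"
    using HH cyc by blast
  moreover have "t - (s0 + real n * Tc) \<in> {0..Tc}" using tn by auto
  ultimately have "tg \<le> g (s0 + real n * Tc + (t - (s0 + real n * Tc))) x" using xn by blast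
  then show ?thesis by simp
qed



definition lc :: "real \<Rightarrow> real \<Rightarrow> nat \<Rightarrow> real" where
  "lc a b M = (a + 1 + 2 * b) * exp (real M) + 1"

lemma lc_gt: "(a + 1 + 2 * b) * exp (real M) < lc a b M" unfolding lc_def by simp

lemma hwin_bound:
  fixes K R :: int and x :: int
  assumes "\<bar>x\<bar> \<le> K - R"
  shows "exp (real_of_int x + - real_of_int K) + exp (- real_of_int x + - real_of_int K) \<le> 2 * exp (- real_of_int R)"
proof -
  have "exp (real_of_int x + - real_of_int K) \<le> exp (- real_of_int R)" using assms by simp
  moreover have "exp (- real_of_int x + - real_of_int K) \<le> exp (- real_of_int R)" using assms by simp
  ultimately show ?thesis by linarith
qed

lemma hwin_out:
  fixes K :: int and x :: int
  assumes "\<not> \<bar>x\<bar> \<le> K"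
  shows "1 \<le> exp (real_of_int x + - real_of_int K) + exp (- real_of_int x + - real_of_int K)"
proof (cases "x > K")
  case True
  then have "1 \<le> exp (real_of_int x + - real_of_int K)" by simp
  then show ?thesis by (smt (verit) exp_gt_zero)
next
  case False
  then have "-x > K" using assms by linarith
  then have "1 \<le> exp (- real_of_int x + - real_of_int K)" by simp
  then show ?thesis by (smt (verit) exp_gt_zero)
qed

lemma win_sub:
  fixes v :: "real \<Rightarrow> int \<Rightarrow> real" and K R :: int
  assumes ab: "a > 0" "b > 0" "M \<ge> 1" and sol: "mf_solution a b M v" and T: "0 \<le> T"
    and base: "\<forall>t\<in>{0..T}. 0 \<le> \<alpha> + \<gamma> * t \<and> \<alpha> + \<gamma> * t \<le> 1 \<and> \<gamma> \<le> ff (a + b) (\<alpha> + \<gamma> * t)"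
    and a1: "\<alpha> \<le> 1"
    and init: "\<forall>x. \<bar>x\<bar> \<le> K \<longrightarrow> \<alpha> \<le> v 0 x"
    and t: "t \<in> {0..T}" and x: "\<bar>x\<bar> \<le> K - R"
  shows "\<alpha> + \<gamma> * t - 2 * exp (lc a b M * t) * exp (- real_of_int R) \<le> v t x"
proof -
  define h where "h x = exp (real_of_int x + - real_of_int K) + exp (- real_of_int x + - real_of_int K)" for x
  have "\<forall>t\<in>{0..T}. \<forall>x. \<alpha> + \<gamma> * t - exp (lc a b M * t) * h x \<le> v t x"
  proof (rule lin_sub[OF ab sol T base _ _ lc_gt])
    show "\<forall>x. 0 \<le> h x" unfolding h_def by (simp add: add_nonneg_nonneg)
    show "\<forall>x. \<forall>y\<in>nbrs M x. h y \<le> exp (real M) * h x" unfolding h_def by (rule ratio_two)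
    show "\<forall>x. \<alpha> - h x \<le> v 0 x"
    proof
      fix x
      show "\<alpha> - h x \<le> v 0 x"
      proof (cases "\<bar>x\<bar> \<le> K")
        case True then show ?thesis using init unfolding h_def by (smt (verit) exp_gt_zero)
      next
        case False
        have "0 \<le> v 0 x" using sol01[OF sol, of 0] by auto
        then show ?thesis using hwin_out[OF False] a1 unfolding h_def by linarith
      qed
    qed
  qed
  then have "\<alpha> + \<gamma> * t - exp (lc a b M * t) * h x \<le> v t x" using t by auto
  moreover have "exp (lc a b M * t) * h x \<le> exp (lc a b M * t) * (2 * exp (- real_of_int R))"
    using hwin_bound[OF x] unfolding h_def by (intro mult_left_mono) auto
  ultimately have "\<alpha> + \<gamma> * t - exp (lc a b M * t) * (2 * exp (- real_of_int R)) \<le> v t x" by linarith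
  then show ?thesis by (simp add: ac_simps)
qed

lemma win_super:
  fixes v :: "real \<Rightarrow> int \<Rightarrow> real" and K R :: int
  assumes ab: "a > 0" "b > 0" "M \<ge> 1" and sol: "mf_solution a b M v" and T: "0 \<le> T"
    and base: "\<forall>t\<in>{0..T}. 0 \<le> \<alpha> + \<gamma> * t \<and> \<alpha> + \<gamma> * t \<le> 1 \<and> ff (a + b) (\<alpha> + \<gamma> * t) \<le> \<gamma>"
    and a1: "0 \<le> \<alpha>"
    and init: "\<forall>x. \<bar>x\<bar> \<le> K \<longrightarrow> v 0 x \<le> \<alpha>"
    and t: "t \<in> {0..T}" and x: "\<bar>x\<bar> \<le> K - R"
  shows "v t x \<le> \<alpha> + \<gamma> * t + 2 * exp (lc a b M * t) * exp (- real_of_int R)"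
proof -
  define h where "h x = exp (real_of_int x + - real_of_int K) + exp (- real_of_int x + - real_of_int K)" for x
  have "\<forall>t\<in>{0..T}. \<forall>x. v t x \<le> \<alpha> + \<gamma> * t + exp (lc a b M * t) * h x"
  proof (rule lin_super[OF ab sol T base _ _ lc_gt])
    show "\<forall>x. 0 \<le> h x" unfolding h_def by (simp add: add_nonneg_nonneg)
    show "\<forall>x. \<forall>y\<in>nbrs M x. h y \<le> exp (real M) * h x" unfolding h_def by (rule ratio_two)
    show "\<forall>x. v 0 x \<le> \<alpha> + h x"
    proof
      fix x
      show "v 0 x \<le> \<alpha> + h x"
      proof (cases "\<bar>x\<bar> \<le> K")
        case True then show ?thesis using init unfolding h_def by (smt (verit) exp_gt_zero)
      next
        case False
        have "v 0 x \<le> 1" using sol01[OF sol, of 0] by auto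
        then show ?thesis using hwin_out[OF False] a1 unfolding h_def by linarith
      qed
    qed
  qed
  then have "v t x \<le> \<alpha> + \<gamma> * t + exp (lc a b M * t) * h x" using t by auto
  moreover have "exp (lc a b M * t) * h x \<le> exp (lc a b M * t) * (2 * exp (- real_of_int R))"
    using hwin_bound[OF x] unfolding h_def by (intro mult_left_mono) auto
  ultimately have "v t x \<le> \<alpha> + \<gamma> * t + exp (lc a b M * t) * (2 * exp (- real_of_int R))" by linarith
  then show ?thesis by (simp add: ac_simps)
qed



lemma ws_one:
  fixes v W :: "real \<Rightarrow> int \<Rightarrow> real" and p :: int
  assumes ab: "a > 0" "b > 0" "M \<ge> 1" and sol: "mf_solution a b M v" and solW: "mf_solution a b M W"
    and W0: "\<forall>x. W 0 x = (if x \<le> 0 then u0 else 0)" and Wt: "W t0 1 = u0" and t0: "t0 > 0"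
    and u01: "u0 \<le> 1" and u00: "0 \<le> u0" and eta: "0 \<le> \<eta>"
    and init: "\<forall>y. - 2 * p \<le> y \<and> y \<le> 0 \<longrightarrow> u0 - \<eta> \<le> v 0 y"
    and y: "y \<le> 1"
  shows "u0 - exp (lc a b M * t0) * (exp (- real_of_int y + - real_of_int (2 * p)) + \<eta>) \<le> v t0 y"
proof -
  define h where "h y = exp (- real_of_int y + - real_of_int (2 * p)) + \<eta>" for y
  have "W t0 y - exp (lc a b M * t0) * h y \<le> v t0 y"
  proof (rule cmp_sol_sub[OF ab sol solW _ _ lc_gt])
    show "\<forall>x. 0 \<le> h x" unfolding h_def using eta by (simp add: add_nonneg_nonneg)
    show "\<forall>x. \<forall>y\<in>nbrs M x. h y \<le> exp (real M) * h x" unfolding h_def by (rule ratio_m_eta[OF eta])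
    show "0 \<le> t0" using t0 by simp
    show "\<forall>x. W 0 x - h x \<le> v 0 x"
    proof
      fix x
      have v0: "0 \<le> v 0 x" using sol01[OF sol, of 0] by auto
      have hh: "h x \<ge> \<eta>" unfolding h_def by simp
      show "W 0 x - h x \<le> v 0 x"
      proof (cases "x \<le> 0")
        case True
        show ?thesis
        proof (cases "- 2 * p \<le> x")
          case True2: True
          then show ?thesis using init True hh W0 by force
        next
          case False
          then have "1 \<le> exp (- real_of_int x + - real_of_int (2 * p))" by simp
          then have "1 \<le> h x" unfolding h_def using eta by linarith
          then show ?thesis using W0 u01 v0 by simp
        qed
      next
        case False
        have "h x \<ge> 0" unfolding h_def using eta by (simp add: add_nonneg_nonneg)
        then show ?thesis using W0 False v0 by simp
      qed
    qed
  qed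
  moreover have "u0 \<le> W t0 y"
  proof -
    have "\<forall>x. W 0 (x + 1) \<le> W 0 x" using W0 u00 by auto
    from mono_sol[OF ab solW this _ y, of t0] show ?thesis using Wt t0 by simp
  qed
  ultimately show ?thesis unfolding h_def by linarith
qed

lemma ws_center:
  fixes v W :: "real \<Rightarrow> int \<Rightarrow> real" and p :: int
  assumes ab: "a > 0" "b > 0" "M \<ge> 1" and sol: "mf_solution a b M v" and solW: "mf_solution a b M W"
    and W0: "\<forall>x. W 0 x = (if x \<le> 0 then u0 else 0)" and Wt: "W t0 1 = u0" and t0: "t0 > 0"
    and u01: "u0 \<le> 1" and u00: "0 \<le> u0" and eta: "0 \<le> \<eta>"
    and init: "\<forall>x. \<bar>x\<bar> \<le> p \<longrightarrow> u0 - \<eta> \<le> v 0 x"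
    and x: "\<bar>x\<bar> \<le> p + 1"
  shows "u0 - exp (lc a b M * t0) * (exp (- real_of_int p) + \<eta>) \<le> v t0 x"
proof (cases "x \<ge> 0")
  case True
  have s1: "mf_solution a b M (\<lambda>t y. v t (y + p))" by (rule sol_shift[OF sol])
  have "u0 - exp (lc a b M * t0) * (exp (- real_of_int (x - p) + - real_of_int (2 * p)) + \<eta>)
      \<le> (\<lambda>t y. v t (y + p)) t0 (x - p)"
    by (rule ws_one[OF ab s1 solW W0 Wt t0 u01 u00 eta]) (use init x in \<open>auto\<close>)
  moreover have "exp (- real_of_int (x - p) + - real_of_int (2 * p)) \<le> exp (- real_of_int p)"
    using True by simp
  ultimately show ?thesis
    by (smt (verit, best) exp_gt_zero mult_left_mono)
next
  case False
  have s1: "mf_solution a b M (\<lambda>t y. v t (- (y + p)))" by (rule sol_shift[OF sol_refl[OF sol]])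
  have "u0 - exp (lc a b M * t0) * (exp (- real_of_int (- x - p) + - real_of_int (2 * p)) + \<eta>)
      \<le> (\<lambda>t y. v t (- (y + p))) t0 (- x - p)"
    by (rule ws_one[OF ab s1 solW W0 Wt t0 u01 u00 eta]) (use init x in \<open>auto\<close>)
  moreover have "exp (- real_of_int (- x - p) + - real_of_int (2 * p)) \<le> exp (- real_of_int p)"
    using False by simp
  ultimately show ?thesis
    by (smt (verit, best) exp_gt_zero mult_left_mono)
qed

lemma rs_one:
  fixes v R :: "real \<Rightarrow> int \<Rightarrow> real" and p :: int
  assumes ab: "a > 0" "b > 0" "M \<ge> 1" and sol: "mf_solution a b M v" and solR: "mf_solution a b M R"
    and R0: "\<forall>x. R 0 x = (if x < 0 then uS else us)" and Rt: "R t0 (-1) = us" and t0: "t0 > 0"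
    and uu: "us \<le> uS" and eta: "0 \<le> \<eta>"
    and glob: "\<forall>y. v 0 y \<le> uS"
    and init: "\<forall>y. 0 \<le> y \<and> y \<le> 2 * p \<longrightarrow> v 0 y \<le> us + \<eta>"
    and y: "-1 \<le> y"
  shows "v t0 y \<le> us + exp (lc a b M * t0) * (exp (real_of_int y + - real_of_int (2 * p)) + \<eta>)"
proof -
  define h where "h y = exp (real_of_int y + - real_of_int (2 * p)) + \<eta>" for y
  have "v t0 y \<le> R t0 y + exp (lc a b M * t0) * h y"
  proof (rule cmp_sol_super[OF ab sol solR _ _ lc_gt])
    show "\<forall>x. 0 \<le> h x" unfolding h_def using eta by (simp add: add_nonneg_nonneg)
    show "\<forall>x. \<forall>y\<in>nbrs M x. h y \<le> exp (real M) * h x" unfolding h_def by (rule ratio_p_eta[OF eta])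
    show "0 \<le> t0" using t0 by simp
    show "\<forall>x. v 0 x \<le> R 0 x + h x"
    proof
      fix x
      have v0: "v 0 x \<le> 1" using sol01[OF sol, of 0] by auto
      have hh: "h x \<ge> \<eta>" unfolding h_def by simp
      show "v 0 x \<le> R 0 x + h x"
      proof (cases "x < 0")
        case True
        then have "R 0 x = uS" using R0 by simp
        moreover have "v 0 x \<le> uS" using glob by simp
        ultimately show ?thesis using hh eta by linarith
      next
        case False
        show ?thesis
        proof (cases "x \<le> 2 * p")
          case True
          then have "v 0 x \<le> us + \<eta>" using init False by simp
          moreover have "R 0 x = us" using R0 False by simp
          ultimately show ?thesis using hh by linarith
        next
          case False2: False
          then have "1 \<le> exp (real_of_int x + - real_of_int (2 * p))" by simp
          then have "1 \<le> h x" unfolding h_def using eta by linarith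
          moreover have "0 \<le> R 0 x" using sol01[OF solR, of 0] by auto
          ultimately show ?thesis using v0 by linarith
        qed
      qed
    qed
  qed
  moreover have "R t0 y \<le> us"
  proof -
    have "\<forall>x. R 0 (x + 1) \<le> R 0 x" using R0 uu by auto
    from mono_sol[OF ab solR this _ y, of t0] show ?thesis using Rt t0 by simp
  qed
  ultimately show ?thesis unfolding h_def by linarith
qed

lemma rs_center:
  fixes v R :: "real \<Rightarrow> int \<Rightarrow> real" and p :: int
  assumes ab: "a > 0" "b > 0" "M \<ge> 1" and sol: "mf_solution a b M v" and solR: "mf_solution a b M R"
    and R0: "\<forall>x. R 0 x = (if x < 0 then uS else us)" and Rt: "R t0 (-1) = us" and t0: "t0 > 0"
    and uu: "us \<le> uS" and eta: "0 \<le> \<eta>"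
    and glob: "\<forall>y. v 0 y \<le> uS"
    and init: "\<forall>x. \<bar>x\<bar> \<le> p \<longrightarrow> v 0 x \<le> us + \<eta>"
    and x: "\<bar>x\<bar> \<le> p + 1"
  shows "v t0 x \<le> us + exp (lc a b M * t0) * (exp (- real_of_int p) + \<eta>)"
proof (cases "x \<le> 0")
  case True
  have s1: "mf_solution a b M (\<lambda>t y. v t (y + - p))" by (rule sol_shift[OF sol])
  have "(\<lambda>t y. v t (y + - p)) t0 (x + p) \<le> us + exp (lc a b M * t0) * (exp (real_of_int (x + p) + - real_of_int (2 * p)) + \<eta>)"
    by (rule rs_one[OF ab s1 solR R0 Rt t0 uu eta]) (use init x glob in \<open>auto\<close>)
  moreover have "exp (real_of_int (x + p) + - real_of_int (2 * p)) \<le> exp (- real_of_int p)"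
    using True by simp
  ultimately show ?thesis
    by (smt (verit, best) exp_gt_zero mult_left_mono)
next
  case False
  have s1: "mf_solution a b M (\<lambda>t y. v t (- (y + - p)))" by (rule sol_shift[OF sol_refl[OF sol]])
  have "(\<lambda>t y. v t (- (y + - p))) t0 (p - x) \<le> us + exp (lc a b M * t0) * (exp (real_of_int (p - x) + - real_of_int (2 * p)) + \<eta>)"
    by (rule rs_one[OF ab s1 solR R0 Rt t0 uu eta]) (use init x glob in \<open>auto\<close>)
  moreover have "exp (real_of_int (p - x) + - real_of_int (2 * p)) \<le> exp (- real_of_int p)"
    using False by simp
  ultimately show ?thesis
    by (smt (verit, best) exp_gt_zero mult_left_mono)
qed



lemma sqw:
  assumes "r \<ge> 4"
  shows "(sqrt (1/4 - 1/r))\<^sup>2 = 1/4 - 1/r" "sqrt (1/4 - 1/r) \<ge> 0" "sqrt (1/4 - 1/r) < 1/2"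
proof -
  have r0: "r > 0" using assms by simp
  have "1/r \<le> 1/4" using assms by (simp add: field_simps)
  then show "(sqrt (1/4 - 1/r))\<^sup>2 = 1/4 - 1/r" by simp
  show "sqrt (1/4 - 1/r) \<ge> 0" using \<open>1/r \<le> 1/4\<close> by simp
  have "1/4 - 1/r < 1/4" using r0 by simp
  then have "sqrt (1/4 - 1/r) < sqrt (1/4)" by (simp add: real_sqrt_less_iff)
  also have "sqrt (1/4) = (1/2::real)" by (simp add: real_sqrt_divide)
  finally show "sqrt (1/4 - 1/r) < 1/2" .
qed

lemma ump:
  assumes "r \<ge> 4"
  shows "0 < u_minus r" "u_minus r \<le> u_plus r" "u_plus r < 1" "u_minus r + u_plus r = 1"
  using sqw[OF assms] unfolding u_minus_def u_plus_def by auto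

lemma ff_factor:
  assumes "r \<ge> 4"
  shows "ff r s = r * s * (s - u_minus r) * (u_plus r - s)"
proof -
  define w where "w = sqrt (1/4 - 1/r)"
  have w2: "w\<^sup>2 = 1/4 - 1/r" unfolding w_def using sqw[OF assms] by simp
  have r0: "r \<noteq> 0" using assms by simp
  have e1: "(s - (1/2 - w)) * ((1/2 + w) - s) = w\<^sup>2 - (s - 1/2)\<^sup>2"
    by (simp add: power2_eq_square field_simps)
  have "(s - (1/2 - w)) * ((1/2 + w) - s) = - (s\<^sup>2 - s + 1/r)"
    unfolding e1 w2 by (simp add: power2_eq_square algebra_simps)
  then have "r * s * ((s - (1/2 - w)) * ((1/2 + w) - s)) = - r * s * (s\<^sup>2 - s + 1/r)" by (simp only: mult_minus_right mult_minus_left)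
  also have "\<dots> = ff r s" unfolding ff_def using r0 by (simp add: power2_eq_square field_simps)
  finally show ?thesis unfolding u_minus_def u_plus_def w_def by (simp add: mult.assoc)
qed

lemma prod3_mono:
  fixes x y z X Y Z :: real
  assumes "0 \<le> x" "x \<le> X" "0 \<le> y" "y \<le> Y" "0 \<le> z" "z \<le> Z"
  shows "x * y * z \<le> X * Y * Z"
proof -
  have "x * y \<le> X * Y" using assms by (intro mult_mono) auto
  moreover have "0 \<le> X * Y" using assms by simp
  ultimately show ?thesis using assms by (intro mult_mono) auto
qed

lemma ff_pos:
  assumes r: "r \<ge> 4" and "0 \<le> lo" "u_minus r \<le> lo" "lo \<le> s" "s \<le> hi" "hi \<le> u_plus r"
  shows "r * (lo * (lo - u_minus r) * (u_plus r - hi)) \<le> ff r s"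
proof -
  have "lo * (lo - u_minus r) * (u_plus r - hi) \<le> s * (s - u_minus r) * (u_plus r - s)"
    using assms by (intro prod3_mono) auto
  then have "r * (lo * (lo - u_minus r) * (u_plus r - hi)) \<le> r * (s * (s - u_minus r) * (u_plus r - s))"
    using r by (intro mult_left_mono) auto
  then show ?thesis using ff_factor[OF r] by (simp add: mult.assoc)
qed

lemma ff_neg_low:
  assumes r: "r \<ge> 4" and "0 \<le> lo" "lo \<le> s" "s \<le> hi" "hi \<le> u_minus r"
  shows "ff r s \<le> - (r * (lo * (u_minus r - hi) * (u_plus r - hi)))"
proof -
  have "lo * (u_minus r - hi) * (u_plus r - hi) \<le> s * (u_minus r - s) * (u_plus r - s)"
    using assms ump[OF r] by (intro prod3_mono) auto
  then have "r * (lo * (u_minus r - hi) * (u_plus r - hi)) \<le> r * (s * (u_minus r - s) * (u_plus r - s))"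
    using r by (intro mult_left_mono) auto
  moreover have "ff r s = - (r * (s * (u_minus r - s) * (u_plus r - s)))"
    using ff_factor[OF r, of s] by (simp add: algebra_simps)
  ultimately show ?thesis by linarith
qed

lemma ff_neg_high:
  assumes r: "r \<ge> 4" and "u_plus r \<le> lo" "lo \<le> s"
  shows "ff r s \<le> - (r * (lo * (lo - u_minus r) * (lo - u_plus r)))"
proof -
  have "lo * (lo - u_minus r) * (lo - u_plus r) \<le> s * (s - u_minus r) * (s - u_plus r)"
    using assms ump[OF r] by (intro prod3_mono) auto
  then have "r * (lo * (lo - u_minus r) * (lo - u_plus r)) \<le> r * (s * (s - u_minus r) * (s - u_plus r))"
    using r by (intro mult_left_mono) auto
  moreover have "ff r s = - (r * (s * (s - u_minus r) * (s - u_plus r)))"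
    using ff_factor[OF r, of s] by (simp add: algebra_simps)
  ultimately show ?thesis by linarith
qed

lemma ff_small_r:
  assumes "0 < r" "r < 4" "0 \<le> s" "s \<le> 1"
  shows "ff r s \<le> - (s * (1 - r / 4))"
proof -
  have "0 \<le> (s - 1/2)\<^sup>2" by simp
  then have "s * (1 - s) \<le> 1/4" by (simp add: power2_eq_square algebra_simps)
  then have "r * (s * (1 - s)) \<le> r * (1/4)" using assms by (intro mult_left_mono) auto
  then have "s * (r * (s * (1 - s))) \<le> s * (r / 4)" using assms by (intro mult_left_mono) auto
  then show ?thesis unfolding ff_def by (simp add: power2_eq_square algebra_simps)
qed



lemma exists_R:
  fixes C d :: real
  assumes "C > 0" "d > 0"
  shows "\<exists>R::int. R \<ge> 1 \<and> C * exp (- real_of_int R) \<le> d"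
proof -
  define R where "R = max 1 \<lceil>ln (C / d)\<rceil>"
  have "ln (C / d) \<le> real_of_int R" unfolding R_def by linarith
  then have "exp (- real_of_int R) \<le> exp (- ln (C / d))" by simp
  also have "\<dots> = d / C" using assms by (simp add: exp_minus ln_div exp_diff)
  finally have "C * exp (- real_of_int R) \<le> C * (d / C)" using assms by (intro mult_left_mono) auto
  then have "C * exp (- real_of_int R) \<le> d" using assms by simp
  moreover have "R \<ge> 1" unfolding R_def by simp
  ultimately show ?thesis by blast
qed

lemma part1:
  fixes a b :: real and M :: nat
  assumes ab: "a > 0" "b > 0" "M \<ge> 1" and exp: "expansion a b M"
  shows "\<exists>u L x0 \<delta> c. u > 0 \<and> L > 0 \<and> x0 > 0 \<and> \<delta> > 0 \<and> c > 0 \<and>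
              u_minus (a+b) < u \<and> u < u_plus (a+b) \<and>
              (\<forall>sol. mf_solution a b M sol \<longrightarrow>
                 (\<forall>x. \<bar>real_of_int x\<bar> \<le> L \<longrightarrow> sol 0 x \<ge> u) \<longrightarrow>
                 (\<forall>t>0. \<forall>x. \<bar>real_of_int x\<bar> \<le> c * t - x0 \<longrightarrow> sol t x \<ge> u + \<delta>))"
proof -
  define r where "r = a + b"
  obtain u0 W t0 where r4: "r > 4" and u0: "u_minus r < u0" "u0 < u_plus r"
    and solW: "mf_solution a b M W" and W0: "\<forall>x. W 0 x = (if x \<le> 0 then u0 else 0)"
    and t0: "t0 > 0" and Wt: "W t0 1 = u0"
    using exp unfolding expansion_def r_def by blast
  have r4': "r \<ge> 4" using r4 by simp
  define um where "um = u_minus r"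
  define up where "up = u_plus r"
  have umup: "0 < um" "um \<le> up" "up < 1" using ump[OF r4'] unfolding um_def up_def by auto
  have u0': "um < u0" "u0 < up" using u0 unfolding um_def up_def by auto
  define l where "l = lc a b M"
  have l0: "l > 0" unfolding l_def lc_def using ab by (simp add: add_pos_nonneg)
  define \<delta> where "\<delta> = (up - u0) / 4"
  have d0: "\<delta> > 0" unfolding \<delta>_def using u0' by simp
  define c1 where "c1 = u0 + 2 * \<delta>"
  define top where "top = u0 + 3 * \<delta>"
  define tg where "tg = u0 + \<delta>"
  define lv where "lv = (um + u0) / 2"
  have top: "top < up" "c1 < up" unfolding top_def c1_def \<delta>_def using u0' by (simp_all add: field_simps)
  have lv: "um < lv" "lv < u0" "0 < lv" unfolding lv_def using u0' umup by simp_all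
  define \<gamma> where "\<gamma> = r * (lv * (lv - um) * (up - top))"
  have g0: "\<gamma> > 0" unfolding \<gamma>_def using lv top r4 by simp
  define \<tau> where "\<tau> = (top - lv) / \<gamma>"
  have tau0: "\<tau> > 0" unfolding \<tau>_def using g0 lv d0 unfolding top_def by simp
  have tau_e: "lv + \<gamma> * \<tau> = top" unfolding \<tau>_def using g0 by simp
  have baseG: "\<forall>t\<in>{0..\<tau>}. 0 \<le> lv + \<gamma> * t \<and> lv + \<gamma> * t \<le> 1 \<and> \<gamma> \<le> ff (a + b) (lv + \<gamma> * t)"
  proof
    fix t assume t: "t \<in> {0..\<tau>}"
    have "\<gamma> * t \<le> \<gamma> * \<tau>" using t g0 by (intro mult_left_mono) auto
    then have le: "lv + \<gamma> * t \<le> top" using tau_e by linarith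
    have ge: "lv \<le> lv + \<gamma> * t" using t g0 by simp
    have "r * (lv * (lv - u_minus r) * (u_plus r - top)) \<le> ff r (lv + \<gamma> * t)"
      by (rule ff_pos[OF r4']) (use lv le ge top in \<open>auto simp: um_def up_def\<close>)
    then have "\<gamma> \<le> ff r (lv + \<gamma> * t)" unfolding \<gamma>_def um_def up_def .
    then show "0 \<le> lv + \<gamma> * t \<and> lv + \<gamma> * t \<le> 1 \<and> \<gamma> \<le> ff (a + b) (lv + \<gamma> * t)"
      using le ge lv top umup unfolding r_def by auto
  qed
  have baseH: "\<forall>t\<in>{0..T}. 0 \<le> c1 + 0 * t \<and> c1 + 0 * t \<le> 1 \<and> 0 \<le> ff (a + b) (c1 + 0 * t)" for T
  proof -
    have c1b: "um \<le> c1" "0 \<le> c1" using u0' d0 umup unfolding c1_def by auto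
    have "r * (c1 * (c1 - u_minus r) * (u_plus r - c1)) \<le> ff r c1"
      by (rule ff_pos[OF r4']) (use c1b top in \<open>auto simp: um_def up_def\<close>)
    moreover have "0 \<le> r * (c1 * (c1 - u_minus r) * (u_plus r - c1))" using c1b top r4 by (simp add: um_def up_def)
    ultimately show ?thesis using c1b top umup unfolding r_def by auto
  qed
  obtain R3 where R3: "R3 \<ge> 1" "2 * exp (l * \<tau>) * exp (- real_of_int R3) \<le> \<delta>"
    using exists_R[of "2 * exp (l * \<tau>)" \<delta>] d0 by auto
  define N where "N = nat (R3 + 1)"
  have N: "int N = R3 + 1" unfolding N_def using R3 by simp
  define Tc where "Tc = real N * t0 + \<tau>"
  have Tc0: "Tc > 0" unfolding Tc_def using t0 tau0 by (simp add: add_nonneg_pos)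
  obtain R1 where R1: "R1 \<ge> 1" "2 * exp (l * Tc) * exp (- real_of_int R1) \<le> \<delta>"
    using exists_R[of "2 * exp (l * Tc)" \<delta>] d0 by auto
  define Q where "Q = 2 * exp (l * t0)"
  have eQ: "exp (l * t0) \<ge> 1" using l0 t0 by simp
  have Q1: "Q \<ge> 1" unfolding Q_def using eQ by linarith
  define \<zeta> where "\<zeta> = (u0 - lv) / Q ^ N"
  have z0: "\<zeta> > 0" unfolding \<zeta>_def using lv Q1 by simp
  have lev1: "lv \<le> u0 - Q ^ N * \<zeta>" unfolding \<zeta>_def using Q1 by simp
  obtain Kmin where Km: "Kmin \<ge> 1" "1 * exp (- real_of_int Kmin) \<le> \<zeta>"
    using exists_R[of 1 \<zeta>] z0 by auto
  define s0 where "s0 = \<tau>"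
  define L where "L = Kmin + R3"
  show ?thesis
  proof (intro exI conjI allI impI)
    show "u0 > 0" using u0' umup by simp
    show "real_of_int L > 0" unfolding L_def using Km R3 by simp
    have "s0 / Tc > 0" unfolding s0_def using tau0 Tc0 by simp
    then show "s0 / Tc + real_of_int R1 + 1 > 0" using R1 by linarith
    show "\<delta> > 0" by (rule d0)
    show "1 / Tc > 0" using Tc0 by simp
    show "u_minus (a + b) < u0" "u0 < u_plus (a + b)" using u0 unfolding r_def by auto
  next
    fix v t x
    assume sol: "mf_solution a b M v"
      and ini: "\<forall>x. \<bar>real_of_int x\<bar> \<le> real_of_int L \<longrightarrow> u0 \<le> v 0 x"
      and t: "t > 0" and xt: "\<bar>real_of_int x\<bar> \<le> 1 / Tc * t - (s0 / Tc + real_of_int R1 + 1)"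
    have u01: "u0 \<le> 1" "0 \<le> u0" using u0' umup by auto
    have HG0: "\<forall>x. \<bar>x\<bar> \<le> K - R3 \<longrightarrow> c1 \<le> v (s + \<tau>) x"
      if s: "s \<ge> 0" and iK: "\<forall>x. \<bar>x\<bar> \<le> K \<longrightarrow> lv \<le> v s x" for s K
    proof (intro allI impI)
      fix x assume x: "\<bar>x\<bar> \<le> K - R3"
      have vs: "mf_solution a b M (\<lambda>t x. v (s + t) x)" by (rule sol_time[OF sol s])
      have "lv + \<gamma> * \<tau> - 2 * exp (lc a b M * \<tau>) * exp (- real_of_int R3) \<le> (\<lambda>t x. v (s + t) x) \<tau> x"
        by (rule win_sub[OF ab vs _ baseG _ _ _ x]) (use tau0 lv umup iK u0' in auto)
      then show "c1 \<le> v (s + \<tau>) x" using tau_e R3 unfolding l_def c1_def top_def by simp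
    qed
    have HW: "\<forall>s\<ge>s0. \<forall>p\<ge>Kmin. \<forall>\<eta>\<ge>\<zeta>. (\<forall>x. \<bar>x\<bar> \<le> p \<longrightarrow> u0 - \<eta> \<le> v s x) \<longrightarrow>
               (\<forall>x. \<bar>x\<bar> \<le> p + 1 \<longrightarrow> u0 - Q * \<eta> \<le> v (s + t0) x)"
    proof (intro allI impI)
      fix s p \<eta> x assume s: "s \<ge> s0" and p: "p \<ge> Kmin" and eta: "\<eta> \<ge> \<zeta>"
        and iw: "\<forall>x. \<bar>x\<bar> \<le> p \<longrightarrow> u0 - \<eta> \<le> v s x" and x: "\<bar>x\<bar> \<le> p + 1"
      have s0': "s \<ge> 0" using s tau0 unfolding s0_def by simp
      have vs: "mf_solution a b M (\<lambda>t x. v (s + t) x)" by (rule sol_time[OF sol s0'])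
      have e0: "0 \<le> \<eta>" using eta z0 by simp
      have "u0 - exp (lc a b M * t0) * (exp (- real_of_int p) + \<eta>) \<le> (\<lambda>t x. v (s + t) x) t0 x"
        by (rule ws_center[OF ab vs solW W0 Wt t0 u01 e0 _ x]) (use iw in auto)
      moreover have "exp (- real_of_int p) \<le> \<eta>"
      proof -
        have "exp (- real_of_int p) \<le> exp (- real_of_int Kmin)" using p by simp
        then show ?thesis using Km eta by linarith
      qed
      moreover have "exp (lc a b M * t0) * (exp (- real_of_int p) + \<eta>) \<le> exp (lc a b M * t0) * (2 * \<eta>)"
        using calculation(2) by (intro mult_left_mono) auto
      ultimately have "u0 - exp (l * t0) * (2 * \<eta>) \<le> v (s + t0) x" unfolding l_def by linarith
      then show "u0 - Q * \<eta> \<le> v (s + t0) x" unfolding Q_def by (simp add: ac_simps)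
    qed
    have HG: "\<forall>s\<ge>s0. \<forall>K\<ge>Kmin. (\<forall>x. \<bar>x\<bar> \<le> K \<longrightarrow> lv \<le> v s x) \<longrightarrow>
               (\<forall>x. \<bar>x\<bar> \<le> K - R3 \<longrightarrow> c1 \<le> v (s + \<tau>) x)"
      using HG0 tau0 unfolding s0_def by (meson less_le_not_le order_trans)
    have init: "\<forall>x. \<bar>x\<bar> \<le> Kmin \<longrightarrow> c1 \<le> v s0 x"
    proof -
      have "\<forall>x. \<bar>x\<bar> \<le> L \<longrightarrow> lv \<le> v 0 x"
      proof (intro allI impI)
        fix x assume "\<bar>x\<bar> \<le> L"
        then have "\<bar>real_of_int x\<bar> \<le> real_of_int L" by linarith
        then show "lv \<le> v 0 x" using ini lv by force
      qed
      from HG0[OF _ this] show ?thesis unfolding s0_def L_def by simp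
    qed
    have cyc: "\<forall>n. \<forall>x. \<bar>x\<bar> \<le> Kmin + int n \<longrightarrow> c1 \<le> v (s0 + real n * Tc) x"
    proof
      fix n
      show "\<forall>x. \<bar>x\<bar> \<le> Kmin + int n \<longrightarrow> c1 \<le> v (s0 + real n * Tc) x"
        by (rule cycle[OF t0 _ Tc_def N z0 Q1 _ HW HG lev1 _ init order_refl])
          (use tau0 d0 z0 in \<open>auto simp: s0_def c1_def\<close>)
    qed
    have HH: "\<forall>n::nat. \<forall>K. (\<forall>x. \<bar>x\<bar> \<le> K \<longrightarrow> c1 \<le> v (s0 + real n * Tc) x) \<longrightarrow>
               (\<forall>t\<in>{0..Tc}. \<forall>x. \<bar>x\<bar> \<le> K - R1 \<longrightarrow> tg \<le> v (s0 + real n * Tc + t) x)"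
    proof (intro allI impI ballI)
      fix n :: nat and K t x
      assume iK: "\<forall>x. \<bar>x\<bar> \<le> K \<longrightarrow> c1 \<le> v (s0 + real n * Tc) x" and t: "t \<in> {0..Tc}"
        and x: "\<bar>x\<bar> \<le> K - R1"
      have sn: "s0 + real n * Tc \<ge> 0" unfolding s0_def using tau0 Tc0 by simp
      have vs: "mf_solution a b M (\<lambda>t x. v (s0 + real n * Tc + t) x)" by (rule sol_time[OF sol sn])
      have "c1 + 0 * t - 2 * exp (lc a b M * t) * exp (- real_of_int R1) \<le> (\<lambda>t x. v (s0 + real n * Tc + t) x) t x"
        by (rule win_sub[OF ab vs _ baseH _ _ t x]) (use Tc0 iK top umup in auto)
      moreover have "exp (lc a b M * t) \<le> exp (lc a b M * Tc)" using t l0 unfolding l_def by (simp add: mult_left_mono)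
      then have "2 * exp (lc a b M * t) * exp (- real_of_int R1) \<le> 2 * exp (lc a b M * Tc) * exp (- real_of_int R1)"
        by (intro mult_right_mono) auto
      ultimately show "tg \<le> v (s0 + real n * Tc + t) x" using R1 unfolding tg_def c1_def l_def by linarith
    qed
    have tt: "t \<ge> s0 + Tc * (real_of_int R1 + 1 + \<bar>real_of_int x\<bar>)"
    proof -
      have "Tc * \<bar>real_of_int x\<bar> \<le> Tc * (1 / Tc * t - (s0 / Tc + real_of_int R1 + 1))"
        using xt Tc0 by (intro mult_left_mono) auto
      moreover have "Tc * (1 / Tc * t - (s0 / Tc + real_of_int R1 + 1)) = t - s0 - Tc * real_of_int R1 - Tc"
        using Tc0 by (simp add: field_simps)
      ultimately show ?thesis by (simp add: algebra_simps)
    qed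
    show "u0 + \<delta> \<le> v t x"
      using cycle_final[OF Tc0 _ _ cyc HH tt] Km R1 unfolding tg_def by simp
  qed
qed



lemma zero_ratio: "\<forall>x. \<forall>y\<in>nbrs M x. (\<lambda>x. 0::real) y \<le> exp (real M) * (\<lambda>x. 0) x" by simp

lemma part2b:
  fixes a b :: real and M :: nat
  assumes ab: "a > 0" "b > 0" "M \<ge> 1" and r4: "a + b < 4"
  shows "\<exists>u L x0 \<delta> c. u > 0 \<and> L > 0 \<and> x0 > 0 \<and> \<delta> > 0 \<and> c > 0 \<and>
              (a + b \<ge> 4 \<longrightarrow> u < u_minus (a+b)) \<and>
              (\<forall>sol. mf_solution a b M sol \<longrightarrow>
                 (\<forall>x. \<bar>real_of_int x\<bar> \<le> L \<longrightarrow> sol 0 x \<le> u) \<longrightarrow>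
                 (\<forall>t>0. \<forall>x. \<bar>real_of_int x\<bar> \<le> c * t - x0 \<longrightarrow> sol t x \<le> u - \<delta>))"
proof -
  define r where "r = a + b"
  have r0: "0 < r" "r < 4" using ab r4 unfolding r_def by auto
  define \<kappa> where "\<kappa> = (1 - r / 4) / 4"
  have k0: "\<kappa> > 0" unfolding \<kappa>_def using r0 by simp
  define T1 where "T1 = 3 / (4 * \<kappa>)"
  have T10: "T1 > 0" unfolding T1_def using k0 by simp
  have T1e: "1 + (- \<kappa>) * T1 = 1/4" unfolding T1_def using k0 by simp
  show ?thesis
  proof (intro exI conjI allI impI)
    show "(1/2::real) > 0" "(1::real) > 0" "T1 + 1 > 0" "(1/4::real) > 0" "(1::real) > 0"
      using T10 by auto
    show "4 \<le> a + b \<Longrightarrow> 1 / 2 < u_minus (a + b)" using r4 by simp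
  next
    fix v t x
    assume sol: "mf_solution a b M v" and t: "t > 0" and xt: "\<bar>real_of_int x\<bar> \<le> 1 * t - (T1 + 1)"
    have tT: "t \<ge> T1" using xt by simp
    have base1: "\<forall>s\<in>{0..T1}. 0 \<le> 1 + (- \<kappa>) * s \<and> 1 + (- \<kappa>) * s \<le> 1 \<and> ff (a + b) (1 + (- \<kappa>) * s) \<le> - \<kappa>"
    proof
      fix s assume s: "s \<in> {0..T1}"
      have "\<kappa> * s \<le> \<kappa> * T1" using s k0 by (intro mult_left_mono) auto
      then have lo: "1/4 \<le> 1 + (- \<kappa>) * s" using T1e by simp
      have hi: "1 + (- \<kappa>) * s \<le> 1" using s k0 by simp
      have "ff r (1 + (- \<kappa>) * s) \<le> - ((1 + (- \<kappa>) * s) * (1 - r / 4))"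
        by (rule ff_small_r) (use r0 lo hi in auto)
      also have "\<dots> \<le> - ((1/4) * (1 - r / 4))"
        using lo r0 by (intro le_imp_neg_le mult_right_mono) auto
      finally show "0 \<le> 1 + (- \<kappa>) * s \<and> 1 + (- \<kappa>) * s \<le> 1 \<and> ff (a + b) (1 + (- \<kappa>) * s) \<le> - \<kappa>"
        using lo hi unfolding \<kappa>_def r_def by simp
    qed
    have "\<forall>s\<in>{0..T1}. \<forall>x. v s x \<le> 1 + (- \<kappa>) * s + exp (lc a b M * s) * 0"
      by (rule lin_super[OF ab sol _ base1 _ zero_ratio lc_gt]) (use T10 sol01[OF sol] in auto)
    then have vT1: "\<forall>x. v T1 x \<le> 1/4"
    proof (intro allI)
      fix x assume h: "\<forall>s\<in>{0..T1}. \<forall>x. v s x \<le> 1 + (- \<kappa>) * s + exp (lc a b M * s) * 0"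
      have "v T1 x \<le> 1 + (- \<kappa>) * T1 + exp (lc a b M * T1) * 0" using h T10 by auto
      then show "v T1 x \<le> 1/4" using T1e by simp
    qed
    have solT: "mf_solution a b M (\<lambda>s x. v (T1 + s) x)" by (rule sol_time[OF sol]) (use T10 in auto)
    have base2: "\<forall>s\<in>{0..t - T1}. 0 \<le> 1/4 + 0 * s \<and> 1/4 + 0 * s \<le> 1 \<and> ff (a + b) (1/4 + 0 * s) \<le> 0"
    proof -
      have "ff r (1/4) \<le> - ((1/4) * (1 - r / 4))" by (rule ff_small_r) (use r0 in auto)
      also have "\<dots> \<le> 0" using r0 by simp
      finally show ?thesis unfolding r_def by simp
    qed
    have "\<forall>s\<in>{0..t - T1}. \<forall>x. (\<lambda>s x. v (T1 + s) x) s x \<le> 1/4 + 0 * s + exp (lc a b M * s) * 0"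
      by (rule lin_super[OF ab solT _ base2 _ zero_ratio lc_gt]) (use tT vT1 in auto)
    moreover have "t - T1 \<in> {0..t - T1}" using tT by simp
    ultimately have "v (T1 + (t - T1)) x \<le> 1/4" by fastforce
    then show "v t x \<le> 1 / 2 - 1 / 4" by simp
  qed
qed



lemma part2a:
  fixes a b :: real and M :: nat
  assumes ab: "a > 0" "b > 0" "M \<ge> 1" and ret: "retreat a b M" and r4: "a + b \<ge> 4"
  shows "\<exists>u L x0 \<delta> c. u > 0 \<and> L > 0 \<and> x0 > 0 \<and> \<delta> > 0 \<and> c > 0 \<and>
              (a + b \<ge> 4 \<longrightarrow> u < u_minus (a+b)) \<and>
              (\<forall>sol. mf_solution a b M sol \<longrightarrow>
                 (\<forall>x. \<bar>real_of_int x\<bar> \<le> L \<longrightarrow> sol 0 x \<le> u) \<longrightarrow>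
                 (\<forall>t>0. \<forall>x. \<bar>real_of_int x\<bar> \<le> c * t - x0 \<longrightarrow> sol t x \<le> u - \<delta>))"
proof -
  define r where "r = a + b"
  have r4': "r \<ge> 4" using r4 unfolding r_def .
  obtain us uS R t0 where us: "0 < us" "us < u_minus r" and uS: "u_plus r < uS" "uS \<le> 1"
    and solR: "mf_solution a b M R" and R0: "\<forall>x. R 0 x = (if x < 0 then uS else us)"
    and t0: "t0 > 0" and Rt: "R t0 (-1) = us"
    using ret r4 unfolding retreat_def r_def by auto
  define um where "um = u_minus r"
  define up where "up = u_plus r"
  have umup: "0 < um" "um \<le> up" "up < 1" using ump[OF r4'] unfolding um_def up_def by auto
  have us': "0 < us" "us < um" "up < uS" "uS \<le> 1" using us uS unfolding um_def up_def by auto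
  define l where "l = lc a b M"
  have l0: "l > 0" unfolding l_def lc_def using ab by (simp add: add_pos_nonneg)
  define \<delta> where "\<delta> = us / 4"
  have d0: "\<delta> > 0" unfolding \<delta>_def using us' by simp
  define c2 where "c2 = us / 2"
  define bt where "bt = us / 4"
  define lv where "lv = (us + um) / 2"
  have lv: "us < lv" "lv < um" unfolding lv_def using us' by simp_all
  define \<gamma> where "\<gamma> = r * (bt * (um - lv) * (up - lv))"
  have g0: "\<gamma> > 0" unfolding \<gamma>_def bt_def using lv us' umup r4' by simp
  define \<tau> where "\<tau> = (lv - bt) / \<gamma>"
  have tau0: "\<tau> > 0" unfolding \<tau>_def bt_def using g0 lv us' by simp
  have tau_e: "lv + (- \<gamma>) * \<tau> = bt" unfolding \<tau>_def using g0 by simp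
  have baseG: "\<forall>t\<in>{0..\<tau>}. 0 \<le> lv + (- \<gamma>) * t \<and> lv + (- \<gamma>) * t \<le> 1 \<and> ff (a + b) (lv + (- \<gamma>) * t) \<le> - \<gamma>"
  proof
    fix t assume t: "t \<in> {0..\<tau>}"
    have "\<gamma> * t \<le> \<gamma> * \<tau>" using t g0 by (intro mult_left_mono) auto
    then have ge: "bt \<le> lv + (- \<gamma>) * t" using tau_e by linarith
    have le: "lv + (- \<gamma>) * t \<le> lv" using t g0 by simp
    have "ff r (lv + (- \<gamma>) * t) \<le> - (r * (bt * (u_minus r - lv) * (u_plus r - lv)))"
      by (rule ff_neg_low[OF r4']) (use lv le ge us' in \<open>auto simp: um_def bt_def\<close>)
    then have "ff r (lv + (- \<gamma>) * t) \<le> - \<gamma>" unfolding \<gamma>_def um_def up_def .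
    moreover have "0 \<le> bt" unfolding bt_def using us' by simp
    ultimately show "0 \<le> lv + (- \<gamma>) * t \<and> lv + (- \<gamma>) * t \<le> 1 \<and> ff (a + b) (lv + (- \<gamma>) * t) \<le> - \<gamma>"
      using le ge lv us' umup unfolding r_def by auto
  qed
  have const_low: "\<forall>t\<in>{0..T}. 0 \<le> c + 0 * t \<and> c + 0 * t \<le> 1 \<and> ff (a + b) (c + 0 * t) \<le> 0"
    if c: "0 \<le> c" "c \<le> um" for c T
  proof -
    have "ff r c \<le> - (r * (c * (u_minus r - c) * (u_plus r - c)))"
      by (rule ff_neg_low[OF r4']) (use c in \<open>auto simp: um_def\<close>)
    moreover have "0 \<le> r * (c * (u_minus r - c) * (u_plus r - c))"
      using c umup r4' by (simp add: um_def up_def)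
    ultimately show ?thesis using c umup unfolding r_def by auto
  qed
  define \<gamma>2 where "\<gamma>2 = r * (uS * (uS - um) * (uS - up))"
  have g20: "\<gamma>2 > 0" unfolding \<gamma>2_def using us' umup r4' by simp
  define T1 where "T1 = (1 - uS) / \<gamma>2"
  have T10: "T1 \<ge> 0" unfolding T1_def using g20 us' by simp
  have T1e: "1 + (- \<gamma>2) * T1 = uS" unfolding T1_def using g20 by simp
  have baseT: "\<forall>t\<in>{0..T1}. 0 \<le> 1 + (- \<gamma>2) * t \<and> 1 + (- \<gamma>2) * t \<le> 1 \<and> ff (a + b) (1 + (- \<gamma>2) * t) \<le> - \<gamma>2"
  proof
    fix t assume t: "t \<in> {0..T1}"
    have "\<gamma>2 * t \<le> \<gamma>2 * T1" using t g20 by (intro mult_left_mono) auto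
    then have ge: "uS \<le> 1 + (- \<gamma>2) * t" using T1e by linarith
    have le: "1 + (- \<gamma>2) * t \<le> 1" using t g20 by simp
    have "ff r (1 + (- \<gamma>2) * t) \<le> - (r * (uS * (uS - u_minus r) * (uS - u_plus r)))"
      by (rule ff_neg_high[OF r4']) (use ge us' in \<open>auto simp: up_def\<close>)
    then have "ff r (1 + (- \<gamma>2) * t) \<le> - \<gamma>2" unfolding \<gamma>2_def um_def up_def .
    then show "0 \<le> 1 + (- \<gamma>2) * t \<and> 1 + (- \<gamma>2) * t \<le> 1 \<and> ff (a + b) (1 + (- \<gamma>2) * t) \<le> - \<gamma>2"
      using le ge us' umup unfolding r_def by auto
  qed
  have baseS: "\<forall>t\<in>{0..T}. 0 \<le> uS + 0 * t \<and> uS + 0 * t \<le> 1 \<and> ff (a + b) (uS + 0 * t) \<le> 0" for T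
  proof -
    have "ff r uS \<le> - (r * (uS * (uS - u_minus r) * (uS - u_plus r)))"
      by (rule ff_neg_high[OF r4']) (use us' in \<open>auto simp: up_def\<close>)
    moreover have "0 \<le> r * (uS * (uS - u_minus r) * (uS - u_plus r))"
      using us' umup r4' by (simp add: um_def up_def)
    ultimately show ?thesis using us' umup unfolding r_def by auto
  qed
  obtain R3 where R3: "R3 \<ge> 1" "2 * exp (l * \<tau>) * exp (- real_of_int R3) \<le> \<delta>"
    using exists_R[of "2 * exp (l * \<tau>)" \<delta>] d0 by auto
  define N where "N = nat (R3 + 1)"
  have N: "int N = R3 + 1" unfolding N_def using R3 by simp
  define Tc where "Tc = real N * t0 + \<tau>"
  have Tc0: "Tc > 0" unfolding Tc_def using t0 tau0 by (simp add: add_nonneg_pos)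
  obtain R1 where R1: "R1 \<ge> 1" "2 * exp (l * Tc) * exp (- real_of_int R1) \<le> \<delta>"
    using exists_R[of "2 * exp (l * Tc)" \<delta>] d0 by auto
  obtain R0 where R0': "R0 \<ge> 1" "2 * exp (l * T1) * exp (- real_of_int R0) \<le> lv - us"
    using exists_R[of "2 * exp (l * T1)" "lv - us"] lv by auto
  define Q where "Q = 2 * exp (l * t0)"
  have eQ: "exp (l * t0) \<ge> 1" using l0 t0 by simp
  have Q1: "Q \<ge> 1" unfolding Q_def using eQ by linarith
  define \<zeta> where "\<zeta> = (lv - us) / Q ^ N"
  have z0: "\<zeta> > 0" unfolding \<zeta>_def using lv Q1 by simp
  have lev1: "- lv \<le> - us - Q ^ N * \<zeta>" unfolding \<zeta>_def using Q1 by simp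
  obtain Kmin where Km: "Kmin \<ge> 1" "1 * exp (- real_of_int Kmin) \<le> \<zeta>"
    using exists_R[of 1 \<zeta>] z0 by auto
  define s0 where "s0 = T1 + \<tau>"
  define L where "L = Kmin + R3 + R0"
  show ?thesis
  proof (intro exI conjI allI impI)
    show "us > 0" using us' by simp
    show "real_of_int L > 0" unfolding L_def using Km R3 R0' by simp
    have "s0 / Tc > 0" unfolding s0_def using tau0 T10 Tc0 by simp
    then show "s0 / Tc + real_of_int R1 + 1 > 0" using R1 by linarith
    show "\<delta> > 0" by (rule d0)
    show "1 / Tc > 0" using Tc0 by simp
    show "us < u_minus (a + b)" using us unfolding r_def by auto
  next
    fix v t x
    assume sol: "mf_solution a b M v"
      and ini: "\<forall>x. \<bar>real_of_int x\<bar> \<le> real_of_int L \<longrightarrow> v 0 x \<le> us"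
      and t: "t > 0" and xt: "\<bar>real_of_int x\<bar> \<le> 1 / Tc * t - (s0 / Tc + real_of_int R1 + 1)"
    have us1: "us \<le> uS" using us' umup by simp
    have vT1: "\<forall>x. v T1 x \<le> uS"
    proof
      fix x
      have "\<forall>s\<in>{0..T1}. \<forall>x. v s x \<le> 1 + (- \<gamma>2) * s + exp (lc a b M * s) * 0"
        by (rule lin_super[OF ab sol T10 baseT _ zero_ratio lc_gt]) (use sol01[OF sol] in auto)
      then have "v T1 x \<le> 1 + (- \<gamma>2) * T1 + exp (lc a b M * T1) * 0" using T10 by auto
      then show "v T1 x \<le> uS" using T1e by simp
    qed
    have glob: "\<forall>y. v s y \<le> uS" if s: "s \<ge> T1" for s
    proof
      fix y
      have solT: "mf_solution a b M (\<lambda>s x. v (T1 + s) x)" by (rule sol_time[OF sol T10])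
      have "\<forall>q\<in>{0..s - T1}. \<forall>x. (\<lambda>s x. v (T1 + s) x) q x \<le> uS + 0 * q + exp (lc a b M * q) * 0"
        by (rule lin_super[OF ab solT _ baseS _ zero_ratio lc_gt]) (use s vT1 in auto)
      moreover have "s - T1 \<in> {0..s - T1}" using s by simp
      ultimately have "v (T1 + (s - T1)) y \<le> uS" by fastforce
      then show "v s y \<le> uS" by simp
    qed
    have inT1: "\<forall>x. \<bar>x\<bar> \<le> L - R0 \<longrightarrow> v T1 x \<le> lv"
    proof (intro allI impI)
      fix x assume x: "\<bar>x\<bar> \<le> L - R0"
      have iL: "\<forall>x. \<bar>x\<bar> \<le> L \<longrightarrow> v 0 x \<le> us"
      proof (intro allI impI)
        fix x assume "\<bar>x\<bar> \<le> L"
        then have "\<bar>real_of_int x\<bar> \<le> real_of_int L" by linarith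
        then show "v 0 x \<le> us" using ini by blast
      qed
      have "v T1 x \<le> us + 0 * T1 + 2 * exp (lc a b M * T1) * exp (- real_of_int R0)"
        by (rule win_super[OF ab sol T10 const_low _ _ _ x]) (use us' iL T10 in auto)
      then show "v T1 x \<le> lv" using R0' unfolding l_def by simp
    qed
    have HG0: "\<forall>x. \<bar>x\<bar> \<le> K - R3 \<longrightarrow> v (s + \<tau>) x \<le> c2"
      if s: "s \<ge> 0" and iK: "\<forall>x. \<bar>x\<bar> \<le> K \<longrightarrow> v s x \<le> lv" for s K
    proof (intro allI impI)
      fix x assume x: "\<bar>x\<bar> \<le> K - R3"
      have vs: "mf_solution a b M (\<lambda>t x. v (s + t) x)" by (rule sol_time[OF sol s])
      have "(\<lambda>t x. v (s + t) x) \<tau> x \<le> lv + (- \<gamma>) * \<tau> + 2 * exp (lc a b M * \<tau>) * exp (- real_of_int R3)"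
        by (rule win_super[OF ab vs _ baseG _ _ _ x]) (use tau0 lv us' iK in auto)
      then show "v (s + \<tau>) x \<le> c2" using tau_e R3 unfolding l_def c2_def bt_def \<delta>_def by simp
    qed
    have init: "\<forall>x. \<bar>x\<bar> \<le> Kmin \<longrightarrow> - c2 \<le> - v s0 x"
    proof -
      from HG0[OF T10 inT1] show ?thesis unfolding s0_def L_def by simp
    qed
    have HW: "\<forall>s\<ge>s0. \<forall>p\<ge>Kmin. \<forall>\<eta>\<ge>\<zeta>. (\<forall>x. \<bar>x\<bar> \<le> p \<longrightarrow> - us - \<eta> \<le> - v s x) \<longrightarrow>
               (\<forall>x. \<bar>x\<bar> \<le> p + 1 \<longrightarrow> - us - Q * \<eta> \<le> - v (s + t0) x)"
    proof (intro allI impI)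
      fix s p \<eta> x assume s: "s \<ge> s0" and p: "p \<ge> Kmin" and eta: "\<eta> \<ge> \<zeta>"
        and iw: "\<forall>x. \<bar>x\<bar> \<le> p \<longrightarrow> - us - \<eta> \<le> - v s x" and x: "\<bar>x\<bar> \<le> p + 1"
      have sT: "s \<ge> T1" using s tau0 unfolding s0_def by simp
      have s0': "s \<ge> 0" using sT T10 by simp
      have vs: "mf_solution a b M (\<lambda>t x. v (s + t) x)" by (rule sol_time[OF sol s0'])
      have e0: "0 \<le> \<eta>" using eta z0 by simp
      have "(\<lambda>t x. v (s + t) x) t0 x \<le> us + exp (lc a b M * t0) * (exp (- real_of_int p) + \<eta>)"
        by (rule rs_center[OF ab vs solR R0 Rt t0 us1 e0 _ _ x]) (use iw glob[OF sT] in auto)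
      moreover have "exp (- real_of_int p) \<le> \<eta>"
      proof -
        have "exp (- real_of_int p) \<le> exp (- real_of_int Kmin)" using p by simp
        then show ?thesis using Km eta by linarith
      qed
      moreover have "exp (lc a b M * t0) * (exp (- real_of_int p) + \<eta>) \<le> exp (lc a b M * t0) * (2 * \<eta>)"
        using calculation(2) by (intro mult_left_mono) auto
      ultimately have "v (s + t0) x \<le> us + exp (l * t0) * (2 * \<eta>)" unfolding l_def by linarith
      then show "- us - Q * \<eta> \<le> - v (s + t0) x" unfolding Q_def by (simp add: ac_simps)
    qed
    have HG: "\<forall>s\<ge>s0. \<forall>K\<ge>Kmin. (\<forall>x. \<bar>x\<bar> \<le> K \<longrightarrow> - lv \<le> - v s x) \<longrightarrow>
               (\<forall>x. \<bar>x\<bar> \<le> K - R3 \<longrightarrow> - c2 \<le> - v (s + \<tau>) x)"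
    proof (intro allI impI)
      fix s K x assume s: "s \<ge> s0" and "K \<ge> Kmin" and iK: "\<forall>x. \<bar>x\<bar> \<le> K \<longrightarrow> - lv \<le> - v s x"
        and x: "\<bar>x\<bar> \<le> K - R3"
      have "s \<ge> 0" using s tau0 T10 unfolding s0_def by simp
      from HG0[OF this] iK x show "- c2 \<le> - v (s + \<tau>) x" by simp
    qed
    have cyc: "\<forall>n. \<forall>x. \<bar>x\<bar> \<le> Kmin + int n \<longrightarrow> - c2 \<le> - v (s0 + real n * Tc) x"
    proof
      fix n
      show "\<forall>x. \<bar>x\<bar> \<le> Kmin + int n \<longrightarrow> - c2 \<le> (\<lambda>t x. - v t x) (s0 + real n * Tc) x"
        by (rule cycle[where g = "\<lambda>t x. - v t x", OF t0 _ Tc_def N z0 Q1 _ HW HG lev1 _ init order_refl])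
          (use tau0 T10 d0 z0 us' in \<open>auto simp: s0_def c2_def\<close>)
    qed
    have HH: "\<forall>n::nat. \<forall>K. (\<forall>x. \<bar>x\<bar> \<le> K \<longrightarrow> - c2 \<le> - v (s0 + real n * Tc) x) \<longrightarrow>
               (\<forall>t\<in>{0..Tc}. \<forall>x. \<bar>x\<bar> \<le> K - R1 \<longrightarrow> - (us - \<delta>) \<le> - v (s0 + real n * Tc + t) x)"
    proof (intro allI impI ballI)
      fix n :: nat and K t x
      assume iK: "\<forall>x. \<bar>x\<bar> \<le> K \<longrightarrow> - c2 \<le> - v (s0 + real n * Tc) x" and t: "t \<in> {0..Tc}"
        and x: "\<bar>x\<bar> \<le> K - R1"
      have sn: "s0 + real n * Tc \<ge> 0" unfolding s0_def using tau0 T10 Tc0 by simp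
      have vs: "mf_solution a b M (\<lambda>t x. v (s0 + real n * Tc + t) x)" by (rule sol_time[OF sol sn])
      have "(\<lambda>t x. v (s0 + real n * Tc + t) x) t x \<le> c2 + 0 * t + 2 * exp (lc a b M * t) * exp (- real_of_int R1)"
        by (rule win_super[OF ab vs _ const_low _ _ t x]) (use Tc0 iK us' in \<open>auto simp: c2_def\<close>)
      moreover have "exp (lc a b M * t) \<le> exp (lc a b M * Tc)" using t l0 unfolding l_def by (simp add: mult_left_mono)
      then have "2 * exp (lc a b M * t) * exp (- real_of_int R1) \<le> 2 * exp (lc a b M * Tc) * exp (- real_of_int R1)"
        by (intro mult_right_mono) auto
      ultimately show "- (us - \<delta>) \<le> - v (s0 + real n * Tc + t) x"
        using R1 unfolding c2_def \<delta>_def l_def by linarith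
    qed
    have tt: "t \<ge> s0 + Tc * (real_of_int R1 + 1 + \<bar>real_of_int x\<bar>)"
    proof -
      have "Tc * \<bar>real_of_int x\<bar> \<le> Tc * (1 / Tc * t - (s0 / Tc + real_of_int R1 + 1))"
        using xt Tc0 by (intro mult_left_mono) auto
      moreover have "Tc * (1 / Tc * t - (s0 / Tc + real_of_int R1 + 1)) = t - s0 - Tc * real_of_int R1 - Tc"
        using Tc0 by (simp add: field_simps)
      ultimately show ?thesis by (simp add: algebra_simps)
    qed
    have "- (us - \<delta>) \<le> (\<lambda>t x. - v t x) t x"
      by (rule cycle_final[OF Tc0 _ _ cyc HH tt]) (use Km R1 in auto)
    then show "v t x \<le> us - \<delta>" by simp
  qed
qed


theorem theorem2p1:
  fixes a b :: real and M :: nat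
  assumes "a > 0" and "b > 0" and "M \<ge> 1"
  shows "(expansion a b M \<longrightarrow>
           (\<exists>u L x0 \<delta> c. u > 0 \<and> L > 0 \<and> x0 > 0 \<and> \<delta> > 0 \<and> c > 0 \<and>
              u_minus (a+b) < u \<and> u < u_plus (a+b) \<and>
              (\<forall>sol. mf_solution a b M sol \<longrightarrow>
                 (\<forall>x. \<bar>real_of_int x\<bar> \<le> L \<longrightarrow> sol 0 x \<ge> u) \<longrightarrow>
                 (\<forall>t>0. \<forall>x. \<bar>real_of_int x\<bar> \<le> c * t - x0 \<longrightarrow> sol t x \<ge> u + \<delta>))))
       \<and> (retreat a b M \<longrightarrow>
           (\<exists>u L x0 \<delta> c. u > 0 \<and> L > 0 \<and> x0 > 0 \<and> \<delta> > 0 \<and> c > 0 \<and>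
              (a + b \<ge> 4 \<longrightarrow> u < u_minus (a+b)) \<and>
              (\<forall>sol. mf_solution a b M sol \<longrightarrow>
                 (\<forall>x. \<bar>real_of_int x\<bar> \<le> L \<longrightarrow> sol 0 x \<le> u) \<longrightarrow>
                 (\<forall>t>0. \<forall>x. \<bar>real_of_int x\<bar> \<le> c * t - x0 \<longrightarrow> sol t x \<le> u - \<delta>))))"
proof (intro conjI impI)
  assume "expansion a b M"
  then show "\<exists>u L x0 \<delta> c. u > 0 \<and> L > 0 \<and> x0 > 0 \<and> \<delta> > 0 \<and> c > 0 \<and>
              u_minus (a+b) < u \<and> u < u_plus (a+b) \<and>
              (\<forall>sol. mf_solution a b M sol \<longrightarrow>
                 (\<forall>x. \<bar>real_of_int x\<bar> \<le> L \<longrightarrow> sol 0 x \<ge> u) \<longrightarrow>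
                 (\<forall>t>0. \<forall>x. \<bar>real_of_int x\<bar> \<le> c * t - x0 \<longrightarrow> sol t x \<ge> u + \<delta>))"
    using part1[OF assms] by blast
next
  assume ret: "retreat a b M"
  show "\<exists>u L x0 \<delta> c. u > 0 \<and> L > 0 \<and> x0 > 0 \<and> \<delta> > 0 \<and> c > 0 \<and>
              (a + b \<ge> 4 \<longrightarrow> u < u_minus (a+b)) \<and>
              (\<forall>sol. mf_solution a b M sol \<longrightarrow>
                 (\<forall>x. \<bar>real_of_int x\<bar> \<le> L \<longrightarrow> sol 0 x \<le> u) \<longrightarrow>
                 (\<forall>t>0. \<forall>x. \<bar>real_of_int x\<bar> \<le> c * t - x0 \<longrightarrow> sol t x \<le> u - \<delta>))"
  proof (cases "a + b \<ge> 4")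
    case True
    then show ?thesis using part2a[OF assms ret] by blast
  next
    case False
    then show ?thesis using part2b[OF assms] by simp
  qed
qed

end
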